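(* Let $d\ge 3$. No graph of the form $\lozenge_{d-1}\star G_4$ (with $G_4$ any graph on $4$ vertices) is $d$-ball packable, except $\lozenge_{d+1}=\lozenge_{d-1}\star C_4$.
   Context: $\lozenge_k$ denotes the $1$-skeleton of the $k$-dimensional orthoplex (the join of $k$ copies of the edgeless graph on $2$ vertices); $C_4$ is the $4$-cycle; $\star$ the graph join. A $d$-ball in $\hat{\mathbb R}^d$ is a closed ball, closed exterior of an open ball with $\infty$, or a closed half-space with $\infty$; a $d$-ball packing is a collection of $d$-balls with disjoint interiors; its tangency graph joins balls meeting in exactly one point; a graph is $d$-ball packable if isomorphic to the tangency graph of some $d$-ball packing. *)

theory Defs
  imports "HOL-Analysis.Analysis"
begin

text \<open>The extended space \<open>R^d \<union> {\<infinity>}\<close> is modelled as \<open>(real^'n) option\<close>,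
  with \<open>None\<close> the point at infinity and \<open>d = CARD('n)\<close>.
  Its topology is the one-point compactification topology.\<close>

definition ext_open :: "(real^'n) option set \<Rightarrow> bool" where
  "ext_open U \<longleftrightarrow> open {x. Some x \<in> U} \<and> (None \<in> U \<longrightarrow> compact {x. Some x \<notin> U})"

definition ext_interior :: "(real^'n) option set \<Rightarrow> (real^'n) option set" where
  "ext_interior S = \<Union>{U. ext_open U \<and> U \<subseteq> S}"

definition is_dball :: "(real^'n) option set \<Rightarrow> bool" where
  "is_dball S \<longleftrightarrow>
     (\<exists>c r. r > 0 \<and> S = Some ` cball c r) \<or>
     (\<exists>c r. r > 0 \<and> S = insert None (Some ` (- ball c r))) \<or>
     (\<exists>a b. a \<noteq> 0 \<and> S = insert None (Some ` {x. a \<bullet> x \<le> b}))"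

definition tangent :: "(real^'n) option set \<Rightarrow> (real^'n) option set \<Rightarrow> bool" where
  "tangent S T \<longleftrightarrow> (\<exists>!p. p \<in> S \<inter> T)"

definition ball_packable :: "'n::finite itself \<Rightarrow> 'v set \<Rightarrow> ('v \<Rightarrow> 'v \<Rightarrow> bool) \<Rightarrow> bool" where
  "ball_packable _ V E \<longleftrightarrow>
     (\<exists>B :: 'v \<Rightarrow> (real^'n) option set.
        inj_on B V \<and> (\<forall>v\<in>V. is_dball (B v)) \<and>
        (\<forall>u\<in>V. \<forall>v\<in>V. u \<noteq> v \<longrightarrow> ext_interior (B u) \<inter> ext_interior (B v) = {}) \<and>
        (\<forall>u\<in>V. \<forall>v\<in>V. u \<noteq> v \<longrightarrow> (E u v \<longleftrightarrow> tangent (B u) (B v))))"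

definition graph_iso :: "'a set \<Rightarrow> ('a \<Rightarrow> 'a \<Rightarrow> bool) \<Rightarrow> 'b set \<Rightarrow> ('b \<Rightarrow> 'b \<Rightarrow> bool) \<Rightarrow> bool" where
  "graph_iso V E W F \<longleftrightarrow>
     (\<exists>f. bij_betw f V W \<and> (\<forall>u\<in>V. \<forall>v\<in>V. E u v \<longleftrightarrow> F (f u) (f v)))"

definition join_V :: "'a set \<Rightarrow> 'b set \<Rightarrow> ('a + 'b) set" where
  "join_V V W = Inl ` V \<union> Inr ` W"

fun join_E :: "('a \<Rightarrow> 'a \<Rightarrow> bool) \<Rightarrow> ('b \<Rightarrow> 'b \<Rightarrow> bool) \<Rightarrow> ('a + 'b) \<Rightarrow> ('a + 'b) \<Rightarrow> bool" where
  "join_E E F (Inl a) (Inl b) = E a b"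
| "join_E E F (Inr a) (Inr b) = F a b"
| "join_E E F (Inl a) (Inr b) = True"
| "join_E E F (Inr a) (Inl b) = True"

text \<open>1-skeleton of the k-dimensional orthoplex: join of k copies of the edgeless graph on 2
  vertices; vertices \<open>(i, s)\<close> with \<open>i < k\<close>, adjacent iff \<open>i \<noteq> j\<close>.\<close>

definition orth_V :: "nat \<Rightarrow> (nat \<times> bool) set" where
  "orth_V k = {0..<k} \<times> UNIV"

definition orth_E :: "nat \<times> bool \<Rightarrow> nat \<times> bool \<Rightarrow> bool" where
  "orth_E p q \<longleftrightarrow> fst p \<noteq> fst q"

definition C4_V :: "nat set" where
  "C4_V = {0..<4}"

definition C4_E :: "nat \<Rightarrow> nat \<Rightarrow> bool" where
  "C4_E i j \<longleftrightarrow> (i + 1) mod 4 = j \<or> (j + 1) mod 4 = i"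

end

theory Submission
  imports Defs
begin


definition lor :: "((real^'n) \<times> real) \<times> real \<Rightarrow> ((real^'n) \<times> real) \<times> real \<Rightarrow> real" where
  "lor u v = inner (fst u) (fst v) - snd u * snd v"

lemma lor_sym: "lor u v = lor v u"
  by (simp add: lor_def inner_commute mult.commute)
lemma lor_add_left: "lor (u + w) v = lor u v + lor w v"
  by (simp add: lor_def inner_add_left algebra_simps)
lemma lor_add_right: "lor v (u + w) = lor v u + lor v w"
  by (simp add: lor_def inner_add_right algebra_simps)
lemma lor_diff_left: "lor (u - w) v = lor u v - lor w v"
  by (simp add: lor_def inner_diff_left algebra_simps)
lemma lor_diff_right: "lor v (u - w) = lor v u - lor v w"
  by (simp add: lor_def inner_diff_right algebra_simps)
lemma lor_scale_left: "lor (c *\<^sub>R u) v = c * lor u v"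
  by (simp add: lor_def algebra_simps)
lemma lor_scale_right: "lor v (c *\<^sub>R u) = c * lor v u"
  by (simp add: lor_def algebra_simps)
lemma lor_minus_left: "lor (- u) v = - lor u v"
  by (simp add: lor_def)
lemma lor_minus_right: "lor v (- u) = - lor v u"
  by (simp add: lor_def)
lemma lor_zero_left[simp]: "lor 0 v = 0" by (simp add: lor_def)
lemma lor_zero_right[simp]: "lor v 0 = 0" by (simp add: lor_def)

lemmas lor_simps = lor_add_left lor_add_right lor_diff_left lor_diff_right lor_scale_left
  lor_scale_right lor_minus_left lor_minus_right

lemma lor_sum_left: "lor (\<Sum>v\<in>S. f v) w = (\<Sum>v\<in>S. lor (f v) w)"
  by (induction S rule: infinite_finite_induct) (simp_all add: lor_add_left)

definition good :: "(((real^'n) \<times> real) \<times> real) set \<Rightarrow> bool" where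
  "good F \<longleftrightarrow> finite F \<and> (\<forall>u\<in>F. lor u u \<noteq> 0) \<and> (\<forall>u\<in>F. \<forall>v\<in>F. u \<noteq> v \<longrightarrow> lor u v = 0)"

lemma good_independent:
  fixes F :: "(((real^'n::finite) \<times> real) \<times> real) set"
  assumes "good F" shows "independent F"
proof
  assume dep: "dependent F"
  have fin: "finite F" using assms by (simp add: good_def)
  obtain u where u: "\<exists>v\<in>F. u v \<noteq> 0" "(\<Sum>v\<in>F. u v *\<^sub>R v) = 0"
    using dep unfolding dependent_finite[OF fin] by blast
  then obtain v where v: "v \<in> F" "u v \<noteq> 0" by blast
  have "0 = lor (\<Sum>v\<in>F. u v *\<^sub>R v) v" using u by simp
  also have "\<dots> = (\<Sum>x\<in>F. u x * lor x v)" by (simp add: lor_sum_left lor_scale_left)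
  also have "\<dots> = u v * lor v v + (\<Sum>x\<in>F - {v}. u x * lor x v)"
    using sum.remove[OF fin v(1)] by simp
  also have "(\<Sum>x\<in>F - {v}. u x * lor x v) = 0"
    using assms v(1) unfolding good_def by (intro sum.neutral) auto
  finally have "u v * lor v v = 0" by simp
  thus False using v assms by (auto simp: good_def)
qed

lemma good_card:
  fixes F :: "(((real^'n::finite) \<times> real) \<times> real) set"
  assumes "good F" shows "card F \<le> CARD('n) + 2"
  using independent_bound[OF good_independent[OF assms]] by simp

lemma reverse_cs:
  fixes p z :: "((real^'n) \<times> real) \<times> real"
  assumes "lor p p < 0" "lor p z = 0"
  shows "lor z z \<ge> 0" "lor z z = 0 \<Longrightarrow> z = 0"
proof -
  obtain P m where p: "p = (P, m)" by (cases p)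
  obtain Z k where z: "z = (Z, k)" by (cases z)
  have pp: "inner P P < m * m" and pz: "inner P Z = m * k" and zz: "lor z z = inner Z Z - k * k"
    using assms by (auto simp: lor_def p z)
  have cs: "(inner P Z)^2 \<le> inner P P * inner Z Z"
    by (rule Cauchy_Schwarz_ineq)
  have PP0: "inner P P \<ge> 0" by simp
  have ZZ0: "inner Z Z \<ge> 0" by simp
  have m0: "m * m > 0" using pp PP0 by linarith
  have 1: "m*m*(k*k) \<le> inner P P * inner Z Z" using cs pz by (simp add: power2_eq_square algebra_simps)
  show g: "lor z z \<ge> 0"
  proof (rule ccontr)
    assume "\<not> ?thesis"
    hence "inner Z Z < k * k" using zz by simp
    hence kk: "k*k > 0" using ZZ0 by linarith
    have "inner P P * inner Z Z \<le> inner P P * (k*k)"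
      using \<open>inner Z Z < k * k\<close> PP0 by (intro mult_left_mono) auto
    also have "\<dots> < m*m*(k*k)" using pp kk by (simp add: mult_strict_right_mono)
    finally have "inner P P * inner Z Z < m*m*(k*k)" .
    thus False using 1 by simp
  qed
  assume e: "lor z z = 0"
  hence "inner Z Z = k*k" using zz by simp
  show "z = 0"
  proof (cases "inner Z Z = 0")
    case True
    then have "k = 0" using \<open>inner Z Z = k*k\<close> by simp
    with True show ?thesis by (simp add: z zero_prod_def)
  next
    case False
    hence "inner Z Z > 0" using ZZ0 by simp
    hence "inner P P * inner Z Z < m*m*inner Z Z" using pp by (rule mult_strict_right_mono[rotated])
    thus ?thesis using 1 \<open>inner Z Z = k*k\<close> by simp
  qed
qed

lemma lemmaP:
  fixes F :: "(((real^'n::finite) \<times> real) \<times> real) set"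
  assumes "good F" "card F + 1 \<ge> CARD('n) + 2" "p \<in> F" "lor p p < 0"
    "\<forall>u\<in>F. lor z u = 0" "\<forall>u\<in>F. lor z' u = 0"
  shows "(lor z z')^2 = lor z z * lor z' z'"
proof (cases "z = 0")
  case True then show ?thesis by simp
next
  case False
  have pz: "lor p z = 0" "lor p z' = 0" using assms by (auto simp: lor_sym)
  have zz: "lor z z > 0" using reverse_cs[OF assms(4) pz(1)] False by force
  define w where "w = z' - (lor z z' / lor z z) *\<^sub>R z"
  have wz: "lor w z = 0" using zz by (simp add: w_def lor_simps lor_sym)
  have wF: "\<forall>u\<in>F. lor w u = 0" using assms by (simp add: w_def lor_simps)
  have ww: "lor w w = lor z' z' - (lor z z')^2 / lor z z"
    using zz by (simp add: w_def lor_simps lor_sym power2_eq_square field_simps)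
  have "w = 0"
  proof (rule ccontr)
    assume w0: "w \<noteq> 0"
    have pw: "lor p w = 0" using wF assms by (simp add: lor_sym)
    have wpos: "lor w w \<noteq> 0" using reverse_cs(2)[OF assms(4) pw] w0 by blast
    have zF: "z \<notin> F" using assms(5) zz by auto
    have wF': "w \<notin> F" using wF wpos by auto
    have wnz: "w \<noteq> z" using wz zz by auto
    have "good (insert w (insert z F))"
      using assms(1) zz wpos wz wF assms(5) by (auto simp: good_def lor_sym)
    hence "card (insert w (insert z F)) \<le> CARD('n) + 2" by (rule good_card)
    moreover have "card (insert w (insert z F)) = card F + 2"
      using zF wF' wnz assms(1) by (simp add: good_def)
    ultimately show False using assms(2) by simp
  qed
  hence "lor w w = 0" by simp
  thus ?thesis using ww zz by (simp add: field_simps)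
qed


definition ballv :: "real^'n \<Rightarrow> real \<Rightarrow> ((real^'n) \<times> real) \<times> real" where
  "ballv c r = (((1/r) *\<^sub>R c, (1 - inner c c + r^2) / (2*r)), (1 + inner c c - r^2) / (2*r))"

definition halfv :: "real^'n \<Rightarrow> real \<Rightarrow> ((real^'n) \<times> real) \<times> real" where
  "halfv a b = ((- (1/norm a) *\<^sub>R a, b / norm a), - (b / norm a))"

lemma lor_bb: assumes "r > 0" "r' > 0"
  shows "lor (ballv c r) (ballv c' r') = (r^2 + r'^2 - (dist c c')^2) / (2*r*r')"
proof -
  have d: "(dist c c')^2 = inner c c - 2 * inner c c' + inner c' c'"
    by (simp add: dist_norm power2_norm_eq_inner inner_diff_left inner_diff_right inner_commute)
  show ?thesis using assms unfolding d
    by (simp add: lor_def ballv_def field_simps power2_eq_square)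
qed

lemma lor_bb_self: assumes "r > 0" shows "lor (ballv c r) (ballv c r) = 1"
  using lor_bb[OF assms assms, of c c] assms by (simp add: power2_eq_square)

lemma lor_bh: assumes "r > 0" "a \<noteq> 0"
  shows "lor (ballv c r) (halfv a b) = (b - inner a c) / (norm a * r)"
  using assms by (simp add: lor_def ballv_def halfv_def field_simps power2_eq_square inner_commute)

lemma lor_hh: assumes "a \<noteq> 0" "a' \<noteq> 0"
  shows "lor (halfv a b) (halfv a' b') = inner a a' / (norm a * norm a')"
  using assms by (simp add: lor_def halfv_def field_simps)

lemma lor_hh_self: assumes "a \<noteq> 0" shows "lor (halfv a b) (halfv a b) = 1"
  using lor_hh[OF assms assms] assms by (simp add: power2_norm_eq_inner[symmetric] power2_eq_square)

lemma ext_open_ball: "ext_open (Some ` ball c r)"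
proof -
  have eq: "{x. Some x \<in> Some ` ball c r} = ball c r" by auto
  show ?thesis unfolding ext_open_def eq by simp
qed

lemma ext_open_ext: "ext_open (insert None (Some ` (- cball c r)))"
proof -
  have eq: "{x. Some x \<in> insert None (Some ` (- cball c r))} = - cball c r" by auto
  have eq2: "{x. Some x \<notin> insert None (Some ` (- cball c r))} = cball c r" by auto
  show ?thesis unfolding ext_open_def eq eq2 by (simp add: open_Compl)
qed

lemma ext_open_half: "a \<noteq> 0 \<Longrightarrow> ext_open (Some ` {x. inner a x < b})"
  by (simp add: ext_open_def inj_image_mem_iff open_halfspace_lt)

lemma ext_interior_mono_sub: "ext_open U \<Longrightarrow> U \<subseteq> S \<Longrightarrow> U \<subseteq> ext_interior S"
  by (auto simp: ext_interior_def)

lemma int_ball: "Some ` ball c r \<subseteq> ext_interior (Some ` cball c r)"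
  by (rule ext_interior_mono_sub[OF ext_open_ball]) auto

lemma int_ext: "insert None (Some ` (- cball c r)) \<subseteq> ext_interior (insert None (Some ` (- ball c r)))"
  by (rule ext_interior_mono_sub[OF ext_open_ext]) auto

lemma int_half: "a \<noteq> 0 \<Longrightarrow> Some ` {x. inner a x < b} \<subseteq> ext_interior (insert None (Some ` {x. inner a x \<le> b}))"
  by (rule ext_interior_mono_sub[OF ext_open_half]) auto

lemma int_ball_up: "ext_interior (Some ` cball c r) \<subseteq> Some ` ball c r"
proof
  fix z assume "z \<in> ext_interior (Some ` cball c r)"
  then obtain U where U: "ext_open U" "U \<subseteq> Some ` cball c r" "z \<in> U" by (auto simp: ext_interior_def)
  then obtain x where z: "z = Some x" by auto
  have "open {x. Some x \<in> U}" using U by (simp add: ext_open_def)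
  moreover have "{x. Some x \<in> U} \<subseteq> cball c r" using U by auto
  ultimately have "{x. Some x \<in> U} \<subseteq> interior (cball c r)" by (intro interior_maximal)
  thus "z \<in> Some ` ball c r" using U z by auto
qed

lemma int_ext_up: assumes "r > 0" shows "ext_interior (insert None (Some ` (- ball c r))) \<subseteq> insert None (Some ` (- cball c r))"
proof
  fix z assume "z \<in> ext_interior (insert None (Some ` (- ball c r)))"
  then obtain U where U: "ext_open U" "U \<subseteq> insert None (Some ` (- ball c r))" "z \<in> U" by (auto simp: ext_interior_def)
  show "z \<in> insert None (Some ` (- cball c r))"
  proof (cases z)
    case None then show ?thesis by simp
  next
    case (Some x)
    have "open {x. Some x \<in> U}" using U by (simp add: ext_open_def)
    moreover have "{x. Some x \<in> U} \<subseteq> - ball c r" using U by auto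
    ultimately have "{x. Some x \<in> U} \<subseteq> interior (- ball c r)" by (intro interior_maximal)
    also have "interior (- ball c r) = - cball c r"
      using assms by (simp add: interior_complement closure_ball)
    finally show ?thesis using U Some by auto
  qed
qed


lemma ex1_Some: "(\<exists>!p. p \<in> Some ` C) \<longleftrightarrow> (\<exists>!x. x \<in> C)"
  by (auto simp: Ex1_def)

lemma tangent_SS: "tangent (Some ` A) (Some ` B) \<longleftrightarrow> (\<exists>!x. x \<in> A \<inter> B)"
proof -
  have "Some ` A \<inter> Some ` B = Some ` (A \<inter> B)" by auto
  thus ?thesis by (simp add: tangent_def ex1_Some)
qed

lemma tangent_SN: "tangent (Some ` A) (insert None (Some ` B)) \<longleftrightarrow> (\<exists>!x. x \<in> A \<inter> B)"
proof -
  have "Some ` A \<inter> insert None (Some ` B) = Some ` (A \<inter> B)" by auto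
  thus ?thesis by (simp add: tangent_def ex1_Some)
qed

lemma tangent_NN: "tangent (insert None (Some ` A)) (insert None (Some ` B)) \<longleftrightarrow> A \<inter> B = {}"
proof -
  have e: "insert None (Some ` A) \<inter> insert None (Some ` B) = insert None (Some ` (A \<inter> B))" by auto
  show ?thesis unfolding tangent_def e
  proof
    assume "\<exists>!p. p \<in> insert None (Some ` (A \<inter> B))"
    thus "A \<inter> B = {}" by auto
  next
    assume "A \<inter> B = {}"
    thus "\<exists>!p. p \<in> insert None (Some ` (A \<inter> B))" by auto
  qed
qed

lemma tangent_sym: "tangent S T = tangent T S"
  by (simp add: tangent_def Int_commute)

lemma between_unique:
  fixes c c' x :: "'a::real_inner"
  assumes "dist c x \<le> r" "dist x c' \<le> r'" "dist c c' \<ge> r + r'" "r + r' > 0"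
  shows "x = c + (r / (r + r')) *\<^sub>R (c' - c)"
proof -
  have t: "dist c c' \<le> dist c x + dist x c'" by (rule dist_triangle)
  have e1: "norm (x - c) = r" "norm (c' - x) = r'"
    using assms t by (auto simp: dist_norm norm_minus_commute)
  have "norm ((x - c) + (c' - x)) = norm (x - c) + norm (c' - x)"
    using assms t e1 by (simp add: dist_norm norm_minus_commute)
  hence "norm (x - c) *\<^sub>R (c' - x) = norm (c' - x) *\<^sub>R (x - c)" by (rule iffD1[OF norm_triangle_eq])
  hence "r *\<^sub>R (c' - x) = r' *\<^sub>R (x - c)" using e1 by simp
  hence h: "(r + r') *\<^sub>R (x - c) = r *\<^sub>R (c' - c)" by (simp add: algebra_simps)
  have "x - c = (1/(r+r')) *\<^sub>R ((r+r') *\<^sub>R (x - c))" using assms(4) by simp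
  also have "\<dots> = (r/(r+r')) *\<^sub>R (c' - c)" unfolding h by simp
  finally show ?thesis by (simp add: algebra_simps)
qed


lemma tan_bb:
  fixes c c' :: "real^'n"
  assumes "r > 0" "r' > 0" "dist c c' \<ge> r + r'"
  shows "tangent (Some ` cball c r) (Some ` cball c' r') \<longleftrightarrow> dist c c' = r + r'"
proof -
  have "(\<exists>!x. x \<in> cball c r \<inter> cball c' r') \<longleftrightarrow> dist c c' = r + r'"
  proof
    assume "\<exists>!x. x \<in> cball c r \<inter> cball c' r'"
    then obtain x where "dist c x \<le> r" "dist c' x \<le> r'" by auto
    hence "dist c c' \<le> r + r'" by (metis add_mono dist_commute dist_triangle order_trans)
    thus "dist c c' = r + r'" using assms by simp
  next
    assume d: "dist c c' = r + r'"
    define x0 where "x0 = c + (r / (r + r')) *\<^sub>R (c' - c)"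
    have "dist c x0 = r" using assms d
      by (simp add: x0_def dist_norm norm_minus_commute)
    moreover have "dist c' x0 = r'"
    proof -
      have e: "1 - r/(r+r') = r'/(r+r')" using assms by (simp add: field_simps)
      have "c' - x0 = (1 - r/(r+r')) *\<^sub>R (c' - c)" by (simp add: x0_def algebra_simps)
      hence "c' - x0 = (r' / (r + r')) *\<^sub>R (c' - c)" unfolding e .
      thus ?thesis using assms d by (simp add: dist_norm norm_minus_commute)
    qed
    ultimately have x0: "x0 \<in> cball c r \<inter> cball c' r'" by simp
    show "\<exists>!x. x \<in> cball c r \<inter> cball c' r'"
    proof (rule ex1I[where a=x0])
      show "x0 \<in> cball c r \<inter> cball c' r'" by (rule x0)
    next
      fix x assume "x \<in> cball c r \<inter> cball c' r'"
      hence "dist c x \<le> r" "dist x c' \<le> r'" by (auto simp: dist_commute)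
      from between_unique[OF this] assms show "x = x0" by (simp add: x0_def)
    qed
  qed
  thus ?thesis by (simp add: tangent_SS)
qed

lemma tan_be:
  fixes c c' :: "real^'n"
  assumes "r > 0" "R > 0" "dist c c' + r \<le> R"
  shows "tangent (Some ` cball c r) (insert None (Some ` (- ball c' R))) \<longleftrightarrow> dist c c' + r = R \<and> c \<noteq> c'"
proof -
  have "(\<exists>!x. x \<in> cball c r \<inter> - ball c' R) \<longleftrightarrow> dist c c' + r = R \<and> c \<noteq> c'"
  proof
    assume ex: "\<exists>!x. x \<in> cball c r \<inter> - ball c' R"
    then obtain x where "dist c x \<le> r" "dist c' x \<ge> R" by auto
    moreover have "dist c' x \<le> dist c' c + dist c x" by (rule dist_triangle)
    ultimately have e: "dist c c' + r = R" using assms by (simp add: dist_commute)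
    have "c \<noteq> c'"
    proof
      assume cc: "c = c'"
      hence rR: "r = R" using e by simp
      obtain k :: 'n where True by simp
      define e1 where "e1 = (axis k 1 :: real^'n)"
      have ne: "norm e1 = 1" by (simp add: e1_def)
      have "c + r *\<^sub>R e1 \<in> cball c r \<inter> - ball c' R" "c - r *\<^sub>R e1 \<in> cball c r \<inter> - ball c' R"
        using cc rR ne assms by (auto simp: dist_norm)
      with ex have "c + r *\<^sub>R e1 = c - r *\<^sub>R e1" by blast
      hence "(c + r *\<^sub>R e1) - (c - r *\<^sub>R e1) = 0" by simp
      moreover have "(c + r *\<^sub>R e1) - (c - r *\<^sub>R e1) = (2*r) *\<^sub>R e1"
        by (simp add: scaleR_left_distrib[symmetric])
      ultimately have "norm ((2*r) *\<^sub>R e1) = 0" by simp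
      thus False using assms ne by simp
    qed
    thus "dist c c' + r = R \<and> c \<noteq> c'" using e by simp
  next
    assume h: "dist c c' + r = R \<and> c \<noteq> c'"
    define \<delta> where "\<delta> = dist c c'"
    have dpos: "\<delta> > 0" using h by (simp add: \<delta>_def)
    define x0 where "x0 = c' + ((\<delta> + r) / \<delta>) *\<^sub>R (c - c')"
    have n: "norm (c - c') = \<delta>" by (simp add: \<delta>_def dist_norm)
    have "dist c' x0 = \<delta> + r" using dpos assms n
      by (simp add: x0_def dist_norm norm_minus_commute)
    moreover have "x0 - c = (r / \<delta>) *\<^sub>R (c - c')"
    proof -
      have e: "(\<delta> + r) / \<delta> - 1 = r / \<delta>" using dpos by (simp add: field_simps)
      have "x0 - c = ((\<delta> + r) / \<delta> - 1) *\<^sub>R (c - c')" by (simp add: x0_def algebra_simps)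
      thus ?thesis unfolding e .
    qed
    hence "norm (x0 - c) = r" using dpos assms n by simp
    hence "dist c x0 = r" by (simp add: dist_norm norm_minus_commute)
    ultimately have x0: "x0 \<in> cball c r \<inter> - ball c' R" using h by (simp add: \<delta>_def)
    show "\<exists>!x. x \<in> cball c r \<inter> - ball c' R"
    proof (rule ex1I[where a=x0])
      show "x0 \<in> cball c r \<inter> - ball c' R" by (rule x0)
    next
      fix x assume "x \<in> cball c r \<inter> - ball c' R"
      hence a1: "dist c x \<le> r" "dist c' x \<ge> \<delta> + r" using h by (auto simp: \<delta>_def)
      have "c = c' + (\<delta> / (\<delta> + r)) *\<^sub>R (x - c')"
      proof (rule between_unique)
        show "dist c' c \<le> \<delta>" by (simp add: \<delta>_def dist_commute)
        show "dist c x \<le> r" by (rule a1(1))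
        show "\<delta> + r \<le> dist c' x" by (rule a1(2))
        show "0 < \<delta> + r" using dpos assms by simp
      qed
      hence "(\<delta> + r) *\<^sub>R (c - c') = \<delta> *\<^sub>R (x - c')" using dpos assms by simp
      hence "x - c' = ((\<delta> + r) / \<delta>) *\<^sub>R (c - c')" using dpos
        by (metis (no_types, lifting) divide_inverse_commute dpos less_irrefl scaleR_one
             scaleR_scaleR inverse_eq_divide left_inverse)
      thus "x = x0" by (simp add: x0_def algebra_simps)
    qed
  qed
  thus ?thesis by (simp add: tangent_SN)
qed

lemma tan_bh:
  fixes c a :: "real^'n"
  assumes "r > 0" "a \<noteq> 0" "b \<le> inner a c - r * norm a"
  shows "tangent (Some ` cball c r) (insert None (Some ` {x. inner a x \<le> b})) \<longleftrightarrow> b = inner a c - r * norm a"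
proof -
  have cs: "inner a (c - x) \<le> norm a * dist c x" for x
    by (metis dist_norm norm_cauchy_schwarz)
  have "(\<exists>!x. x \<in> cball c r \<inter> {x. inner a x \<le> b}) \<longleftrightarrow> b = inner a c - r * norm a"
  proof
    assume "\<exists>!x. x \<in> cball c r \<inter> {x. inner a x \<le> b}"
    then obtain x where x: "dist c x \<le> r" "inner a x \<le> b" by auto
    have "inner a (c - x) \<le> norm a * r" using cs[of x] x(1) by (meson mult_left_mono norm_ge_zero order_trans)
    thus "b = inner a c - r * norm a" using x assms(3) by (simp add: inner_diff_right algebra_simps)
  next
    assume h: "b = inner a c - r * norm a"
    have na: "norm a > 0" using assms by simp
    define x0 where "x0 = c - (r / norm a) *\<^sub>R a"
    have "x0 \<in> cball c r \<inter> {x. inner a x \<le> b}"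
      using na assms h by (simp add: x0_def dist_norm inner_diff_right power2_norm_eq_inner[symmetric] power2_eq_square)
    then show "\<exists>!x. x \<in> cball c r \<inter> {x. inner a x \<le> b}"
    proof (rule ex1I[where a=x0])
      fix x assume "x \<in> cball c r \<inter> {x. inner a x \<le> b}"
      hence x: "dist c x \<le> r" "inner a x \<le> b" by auto
      have "r * norm a \<le> inner a (c - x)" using x h by (simp add: inner_diff_right)
      also have "\<dots> \<le> norm a * dist c x" by (rule cs)
      finally have "r \<le> dist c x" using na by (simp add: mult.commute)
      hence d: "dist c x = r" using x by simp
      have "inner a (c - x) = norm a * norm (c - x)"
        using \<open>r * norm a \<le> inner a (c - x)\<close> cs[of x] d by (simp add: dist_norm mult.commute)
      hence "norm a *\<^sub>R (c - x) = norm (c - x) *\<^sub>R a" by (simp add: norm_cauchy_schwarz_eq)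
      hence "norm a *\<^sub>R (c - x) = r *\<^sub>R a" using d by (simp add: dist_norm)
      hence "c - x = (r / norm a) *\<^sub>R a" using na
        by (metis (no_types, lifting) divide_inverse_commute less_irrefl scaleR_one
             scaleR_scaleR inverse_eq_divide left_inverse)
      thus "x = x0" by (simp add: x0_def algebra_simps)
    qed
  qed
  thus ?thesis by (simp add: tangent_SN)
qed


lemma disj_lower: "ext_interior S \<inter> ext_interior T = {} \<Longrightarrow> A \<subseteq> ext_interior S \<Longrightarrow> B \<subseteq> ext_interior T \<Longrightarrow> A \<inter> B = {}"
  by blast

lemma d_bb:
  fixes c c' :: "real^'n"
  assumes "r > 0" "r' > 0" "ext_interior (Some ` cball c r) \<inter> ext_interior (Some ` cball c' r') = {}"
  shows "r + r' \<le> dist c c'"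
proof (rule ccontr)
  assume "\<not> ?thesis"
  hence lt: "dist c c' < r + r'" by simp
  have "Some ` ball c r \<inter> Some ` ball c' r' = {}" by (rule disj_lower[OF assms(3) int_ball int_ball])
  hence e: "ball c r \<inter> ball c' r' = {}" by auto
  define x0 where "x0 = c + (r / (r + r')) *\<^sub>R (c' - c)"
  have "norm (x0 - c) = r / (r + r') * dist c c'" using assms
    by (simp add: x0_def dist_norm norm_minus_commute)
  also have "\<dots> < r / (r + r') * (r + r')" using lt assms by (intro mult_strict_left_mono) auto
  also have "\<dots> = r" using assms by simp
  finally have 1: "x0 \<in> ball c r" by (simp add: dist_norm norm_minus_commute)
  have ee: "1 - r/(r+r') = r'/(r+r')" using assms by (simp add: field_simps)
  have "c' - x0 = (1 - r/(r+r')) *\<^sub>R (c' - c)" by (simp add: x0_def algebra_simps)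
  hence "c' - x0 = (r' / (r + r')) *\<^sub>R (c' - c)" unfolding ee .
  hence "norm (c' - x0) = r' / (r + r') * dist c c'" using assms by (simp add: dist_norm norm_minus_commute)
  also have "\<dots> < r' / (r + r') * (r + r')" using lt assms by (intro mult_strict_left_mono) auto
  also have "\<dots> = r'" using assms by simp
  finally have 2: "x0 \<in> ball c' r'" by (simp add: dist_norm)
  show False using 1 2 e by blast
qed

lemma d_be:
  fixes c c' :: "real^'n"
  assumes "r > 0" "ext_interior (Some ` cball c r) \<inter> ext_interior (insert None (Some ` (- ball c' R))) = {}"
  shows "dist c c' + r \<le> R"
proof -
  have "Some ` ball c r \<inter> insert None (Some ` (- cball c' R)) = {}" by (rule disj_lower[OF assms(2) int_ball int_ext])
  hence "ball c r \<subseteq> cball c' R" by auto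
  thus ?thesis using assms(1) by (simp add: ball_subset_cball_iff)
qed

lemma d_bh:
  fixes c a :: "real^'n"
  assumes "r > 0" "a \<noteq> 0" "ext_interior (Some ` cball c r) \<inter> ext_interior (insert None (Some ` {x. inner a x \<le> b})) = {}"
  shows "b \<le> inner a c - r * norm a"
proof (rule ccontr)
  assume "\<not> ?thesis"
  hence lt: "inner a c - r * norm a < b" by simp
  have "Some ` ball c r \<inter> Some ` {x. inner a x < b} = {}" by (rule disj_lower[OF assms(3) int_ball int_half[OF assms(2)]])
  hence e: "ball c r \<inter> {x. inner a x < b} = {}" by auto
  have na: "norm a > 0" using assms by simp
  define s where "s = (inner a c - b) / norm a"
  have sr: "s < r" using lt na by (simp add: s_def field_simps)
  define t where "t = (max s 0 + r) / 2"
  have t: "0 \<le> t" "t < r" "s < t" using sr assms(1) by (auto simp: t_def max_def)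
  define x where "x = c - (t / norm a) *\<^sub>R a"
  have "dist c x = t" using na t by (simp add: x_def dist_norm)
  hence 1: "x \<in> ball c r" using t by simp
  have "inner a x = inner a c - t * norm a" using na
    by (simp add: x_def inner_diff_right power2_norm_eq_inner[symmetric] power2_eq_square)
  also have "\<dots> < inner a c - s * norm a" using t na by simp
  also have "\<dots> = b" using na by (simp add: s_def)
  finally have 2: "inner a x < b" .
  show False using 1 2 e by blast
qed

lemma d_hh:
  fixes a a' :: "real^'n"
  assumes "a \<noteq> 0" "a' \<noteq> 0"
    "ext_interior (insert None (Some ` {x. inner a x \<le> b})) \<inter> ext_interior (insert None (Some ` {x. inner a' x \<le> b'})) = {}"
  shows "inner a a' = - (norm a * norm a')" "b / norm a + b' / norm a' \<le> 0"
proof -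
  have "Some ` {x. inner a x < b} \<inter> Some ` {x. inner a' x < b'} = {}"
    by (rule disj_lower[OF assms(3) int_half[OF assms(1)] int_half[OF assms(2)]])
  hence e: "\<And>x. inner a x < b \<Longrightarrow> inner a' x < b' \<Longrightarrow> False" by auto
  define n where "n = (1 / norm a) *\<^sub>R a"
  define n' where "n' = (1 / norm a') *\<^sub>R a'"
  define \<beta> where "\<beta> = b / norm a"
  define \<beta>' where "\<beta>' = b' / norm a'"
  have na: "norm a > 0" "norm a' > 0" using assms by auto
  have nn: "norm n = 1" "norm n' = 1" using na by (simp_all add: n_def n'_def)
  have ix: "inner n x < \<beta> \<Longrightarrow> inner n' x < \<beta>' \<Longrightarrow> False" for x
  proof -
    assume "inner n x < \<beta>" "inner n' x < \<beta>'"
    hence "inner a x < b" "inner a' x < b'" using na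
      by (simp_all add: n_def n'_def \<beta>_def \<beta>'_def field_simps)
    thus False by (rule e)
  qed
  have cs: "inner n n' \<ge> -1"
  proof -
    have "\<bar>inner n n'\<bar> \<le> norm n * norm n'" by (rule Cauchy_Schwarz_ineq2)
    thus ?thesis using nn by simp
  qed
  have nneq: "inner n n' = -1"
  proof (rule ccontr)
    assume "inner n n' \<noteq> -1"
    hence pos: "1 + inner n n' > 0" using cs by simp
    define t where "t = (\<bar>\<beta>\<bar> + \<bar>\<beta>'\<bar> + 1) / (1 + inner n n')"
    define x where "x = - t *\<^sub>R (n + n')"
    have "inner n x = - t * (1 + inner n n')" "inner n' x = - t * (1 + inner n n')"
      using nn by (simp_all add: x_def inner_add_right power2_norm_eq_inner[symmetric] inner_commute)
    moreover have "t * (1 + inner n n') = \<bar>\<beta>\<bar> + \<bar>\<beta>'\<bar> + 1" using pos by (simp add: t_def)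
    ultimately have "inner n x < \<beta>" "inner n' x < \<beta>'" by linarith+
    thus False by (rule ix)
  qed
  thus "inner a a' = - (norm a * norm a')" using na by (simp add: n_def n'_def field_simps)
  have ii: "inner n n = 1" "inner n' n' = 1" using nn by (simp_all add: power2_norm_eq_inner[symmetric])
  have "norm (n + n') ^ 2 = 0"
    using ii nneq by (simp add: power2_norm_eq_inner inner_add_left inner_add_right inner_commute)
  hence "n + n' = 0" by simp
  hence n': "n' = - n" by (metis add.commute add_diff_cancel_left' diff_0)
  show "b / norm a + b' / norm a' \<le> 0"
  proof (rule ccontr)
    assume "\<not> ?thesis"
    hence pos: "\<beta> + \<beta>' > 0" by (simp add: \<beta>_def \<beta>'_def)
    define x where "x = ((\<beta> - \<beta>') / 2) *\<^sub>R n"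
    have "inner n x = (\<beta> - \<beta>') / 2" "inner n' x = - ((\<beta> - \<beta>') / 2)"
      using nn n' by (simp_all add: x_def power2_norm_eq_inner[symmetric])
    hence "inner n x < \<beta>" "inner n' x < \<beta>'" using pos by (simp_all add: field_simps)
    thus False by (rule ix)
  qed
qed

lemma d_ee:
  "ext_interior (insert None (Some ` (- ball c r))) \<inter> ext_interior (insert None (Some ` (- ball c' r'))) = {} \<Longrightarrow> False"
  using int_ext[of c r] int_ext[of c' r'] by blast

lemma d_eh:
  fixes c a :: "real^'n"
  assumes "a \<noteq> 0" "ext_interior (insert None (Some ` (- ball c R))) \<inter> ext_interior (insert None (Some ` {x. inner a x \<le> b})) = {}"
  shows False
proof -
  have "insert None (Some ` (- cball c R)) \<inter> Some ` {x. inner a x < b} = {}"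
    by (rule disj_lower[OF assms(2) int_ext int_half[OF assms(1)]])
  hence E: "(- cball c R) \<inter> {x. inner a x < b} = {}" by auto
  have e: False if "dist c x > R" "inner a x < b" for x
  proof -
    have "x \<in> (- cball c R) \<inter> {x. inner a x < b}" using that by simp
    thus False using E by blast
  qed
  have na: "norm a > 0" using assms by simp
  define t where "t = \<bar>R\<bar> + \<bar>(inner a c - b) / norm a\<bar> + 1"
  define x where "x = c - (t / norm a) *\<^sub>R a"
  have t0: "t > 0" by (simp add: t_def add_nonneg_pos)
  have "dist c x = t" using na t0 by (simp add: x_def dist_norm)
  moreover have "0 \<le> \<bar>(inner a c - b) / norm a\<bar>" by simp
  ultimately have 1: "dist c x > R" unfolding t_def by linarith
  have "inner a x = inner a c - t * norm a" using na
    by (simp add: x_def inner_diff_right power2_norm_eq_inner[symmetric] power2_eq_square)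
  moreover have "t * norm a > inner a c - b"
  proof -
    have "(inner a c - b) / norm a \<le> \<bar>(inner a c - b) / norm a\<bar>" by (rule abs_ge_self)
    hence "(inner a c - b) / norm a < t" unfolding t_def by linarith
    thus ?thesis using na by (simp add: field_simps)
  qed
  ultimately have 2: "inner a x < b" by simp
  show False by (rule e[OF 1 2])
qed


definition rep :: "(real^'n) option set \<Rightarrow> ((real^'n) \<times> real) \<times> real \<Rightarrow> bool" where
  "rep S v \<longleftrightarrow> (\<exists>c r. r > 0 \<and> S = Some ` cball c r \<and> v = ballv c r) \<or>
     (\<exists>c r. r > 0 \<and> S = insert None (Some ` (- ball c r)) \<and> v = - ballv c r) \<or>
     (\<exists>a b. a \<noteq> 0 \<and> S = insert None (Some ` {x. inner a x \<le> b}) \<and> v = halfv a b)"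

lemma rep_exists: "is_dball S \<Longrightarrow> \<exists>v. rep S v"
  unfolding is_dball_def rep_def by blast

lemma rep_unit: "rep S v \<Longrightarrow> lor v v = 1"
  unfolding rep_def by (auto simp: lor_bb_self lor_hh_self lor_simps)

definition PP where
  "PP S v T w \<longleftrightarrow> lor v w \<le> -1 \<and> (tangent S T \<longrightarrow> lor v w = -1) \<and> (lor v w = -1 \<and> w \<noteq> - v \<longrightarrow> tangent S T)"

lemma PP_sym: "PP S v T w \<Longrightarrow> PP T w S v"
  unfolding PP_def by (auto simp: lor_sym tangent_sym)

lemma pp_bb:
  fixes c c' :: "real^'n"
  assumes "r > 0" "r' > 0" "ext_interior (Some ` cball c r) \<inter> ext_interior (Some ` cball c' r') = {}"
  shows "PP (Some ` cball c r) (ballv c r) (Some ` cball c' r') (ballv c' r')"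
proof -
  define \<delta> where "\<delta> = dist c c'"
  have d: "r + r' \<le> \<delta>" using d_bb[OF assms] by (simp add: \<delta>_def)
  have l: "lor (ballv c r) (ballv c' r') = -1 + ((r+r')^2 - \<delta>^2) / (2*r*r')"
    using assms(1,2) by (simp add: lor_bb \<delta>_def field_simps power2_eq_square)
  have sq: "(r+r')^2 \<le> \<delta>^2" using d assms by (intro power_mono) auto
  have sqe: "(r+r')^2 = \<delta>^2 \<longleftrightarrow> \<delta> = r + r'" using d assms by (auto simp: power2_eq_iff)
  have q: "((r+r')^2 - \<delta>^2) / (2*r*r') \<le> 0" using sq assms by (intro divide_nonpos_pos) auto
  have q0: "((r+r')^2 - \<delta>^2) / (2*r*r') = 0 \<longleftrightarrow> \<delta> = r + r'" using assms sqe by auto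
  have t: "tangent (Some ` cball c r) (Some ` cball c' r') \<longleftrightarrow> \<delta> = r + r'"
    using tan_bb[OF assms(1,2)] d by (simp add: \<delta>_def)
  show ?thesis unfolding PP_def l t using q q0 by auto
qed

lemma pp_be:
  fixes c c' :: "real^'n"
  assumes "r > 0" "R > 0" "ext_interior (Some ` cball c r) \<inter> ext_interior (insert None (Some ` (- ball c' R))) = {}"
  shows "PP (Some ` cball c r) (ballv c r) (insert None (Some ` (- ball c' R))) (- ballv c' R)"
proof -
  define \<delta> where "\<delta> = dist c c'"
  have d: "\<delta> + r \<le> R" using d_be[OF assms(1,3)] by (simp add: \<delta>_def)
  have d0: "\<delta> \<ge> 0" by (simp add: \<delta>_def)
  have l: "lor (ballv c r) (- ballv c' R) = -1 + (\<delta>^2 - (R - r)^2) / (2*r*R)"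
    using assms(1,2) by (simp add: lor_simps lor_bb \<delta>_def field_simps power2_eq_square)
  have sq: "\<delta>^2 \<le> (R - r)^2" using d d0 by (intro power_mono) auto
  have sqe: "\<delta>^2 = (R - r)^2 \<longleftrightarrow> \<delta> + r = R" using d d0 by (auto simp: power2_eq_iff)
  have q: "(\<delta>^2 - (R - r)^2) / (2*r*R) \<le> 0" using sq assms by (intro divide_nonpos_pos) auto
  have q0: "(\<delta>^2 - (R - r)^2) / (2*r*R) = 0 \<longleftrightarrow> \<delta> + r = R" using assms sqe by auto
  have t: "tangent (Some ` cball c r) (insert None (Some ` (- ball c' R))) \<longleftrightarrow> \<delta> + r = R \<and> c \<noteq> c'"
    using tan_be[OF assms(1,2)] d by (simp add: \<delta>_def)
  have neg: "\<delta> + r = R \<Longrightarrow> c = c' \<Longrightarrow> - ballv c' R = - ballv c r" by (simp add: \<delta>_def)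
  show ?thesis unfolding PP_def l t using q q0 neg by auto
qed

lemma pp_bh:
  fixes c a :: "real^'n"
  assumes "r > 0" "a \<noteq> 0" "ext_interior (Some ` cball c r) \<inter> ext_interior (insert None (Some ` {x. inner a x \<le> b})) = {}"
  shows "PP (Some ` cball c r) (ballv c r) (insert None (Some ` {x. inner a x \<le> b})) (halfv a b)"
proof -
  have d: "b \<le> inner a c - r * norm a" by (rule d_bh[OF assms])
  have na: "norm a > 0" using assms by simp
  have l: "lor (ballv c r) (halfv a b) = -1 + (b - (inner a c - r * norm a)) / (norm a * r)"
    using assms(1) na by (simp add: lor_bh[OF assms(1,2)] field_simps)
  have q: "(b - (inner a c - r * norm a)) / (norm a * r) \<le> 0" using d na assms by (intro divide_nonpos_pos) auto
  have q0: "(b - (inner a c - r * norm a)) / (norm a * r) = 0 \<longleftrightarrow> b = inner a c - r * norm a" using na assms by auto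
  have t: "tangent (Some ` cball c r) (insert None (Some ` {x. inner a x \<le> b})) \<longleftrightarrow> b = inner a c - r * norm a"
    by (rule tan_bh[OF assms(1,2) d])
  show ?thesis unfolding PP_def l t using q q0 by auto
qed

lemma pp_hh:
  fixes a a' :: "real^'n"
  assumes "a \<noteq> 0" "a' \<noteq> 0"
    "ext_interior (insert None (Some ` {x. inner a x \<le> b})) \<inter> ext_interior (insert None (Some ` {x. inner a' x \<le> b'})) = {}"
  shows "PP (insert None (Some ` {x. inner a x \<le> b})) (halfv a b) (insert None (Some ` {x. inner a' x \<le> b'})) (halfv a' b')"
proof -
  note d = d_hh[OF assms]
  have na: "norm a > 0" "norm a' > 0" using assms by auto
  have l: "lor (halfv a b) (halfv a' b') = -1" using d(1) na by (simp add: lor_hh[OF assms(1,2)])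
  have "inner (-a) a' = norm (-a) * norm a'" using d(1) by simp
  hence "norm (-a) *\<^sub>R a' = norm a' *\<^sub>R (-a)" by (rule iffD1[OF norm_cauchy_schwarz_eq])
  hence par: "norm a *\<^sub>R a' = - (norm a' *\<^sub>R a)" by simp
  have par2: "(1 / norm a') *\<^sub>R a' = - ((1 / norm a) *\<^sub>R a)"
  proof -
    have "(1 / norm a') *\<^sub>R a' = (1 / (norm a * norm a')) *\<^sub>R (norm a *\<^sub>R a')" using na by simp
    also have "\<dots> = - ((1 / norm a) *\<^sub>R a)" unfolding par using na by simp
    finally show ?thesis .
  qed
  have ia: "inner a' x = - (norm a' / norm a) * inner a x" for x
  proof -
    have "inner ((1 / norm a') *\<^sub>R a') x = inner (- ((1 / norm a) *\<^sub>R a)) x" by (simp only: par2)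
    thus ?thesis using na by (simp add: field_simps)
  qed
  have tang: "tangent (insert None (Some ` {x. inner a x \<le> b})) (insert None (Some ` {x. inner a' x \<le> b'}))"
    if lt: "b / norm a + b' / norm a' < 0"
  proof -
    have "{x. inner a x \<le> b} \<inter> {x. inner a' x \<le> b'} = {}"
    proof (rule ccontr)
      assume "\<not> ?thesis"
      then obtain x where x: "inner a x \<le> b" "inner a' x \<le> b'" by auto
      have "- (norm a' / norm a) * inner a x \<le> b'" using x(2) ia by simp
      hence "- (inner a x / norm a) \<le> b' / norm a'" using na by (simp add: field_simps)
      moreover have "inner a x / norm a \<le> b / norm a" using x(1) na by (simp add: divide_right_mono)
      ultimately show False using lt by linarith
    qed
    thus ?thesis by (simp add: tangent_NN)
  qed
  have neg: "halfv a' b' = - halfv a b" if e: "b / norm a + b' / norm a' = 0"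
  proof -
    have "b' / norm a' = - (b / norm a)" using e by simp
    thus ?thesis unfolding halfv_def using par2 by simp
  qed
  show ?thesis unfolding PP_def l using tang neg d(2) by force
qed

lemma pack_pair:
  assumes "rep S v" "rep T w" "ext_interior S \<inter> ext_interior T = {}"
  shows "PP S v T w"
proof -
  have sym: "ext_interior T \<inter> ext_interior S = {}" using assms(3) by blast
  from assms(1) consider
      (B) c r where "r > 0" "S = Some ` cball c r" "v = ballv c r"
    | (E) c r where "r > 0" "S = insert None (Some ` (- ball c r))" "v = - ballv c r"
    | (H) a b where "a \<noteq> 0" "S = insert None (Some ` {x. inner a x \<le> b})" "v = halfv a b"
    unfolding rep_def by blast
  note cS = this
  from assms(2) consider
      (B) c r where "r > 0" "T = Some ` cball c r" "w = ballv c r"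
    | (E) c r where "r > 0" "T = insert None (Some ` (- ball c r))" "w = - ballv c r"
    | (H) a b where "a \<noteq> 0" "T = insert None (Some ` {x. inner a x \<le> b})" "w = halfv a b"
    unfolding rep_def by blast
  note cT = this
  show ?thesis
  proof (cases rule: cS)
    case SB: (B c r)
    show ?thesis
    proof (cases rule: cT)
      case (B c' r') then show ?thesis using SB assms pp_bb by simp
    next
      case (E c' r') then show ?thesis using SB assms pp_be by simp
    next
      case (H a b) then show ?thesis using SB assms pp_bh by simp
    qed
  next
    case SE: (E c r)
    show ?thesis
    proof (cases rule: cT)
      case (B c' r') then show ?thesis using SE sym pp_be PP_sym by metis
    next
      case (E c' r') then show ?thesis using SE assms d_ee by metis
    next
      case (H a b) then show ?thesis using SE assms d_eh by metis
    qed
  next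
    case SH: (H a b)
    show ?thesis
    proof (cases rule: cT)
      case (B c' r') then show ?thesis using SH sym pp_bh PP_sym by metis
    next
      case (E c' r') then show ?thesis using SH sym d_eh by metis
    next
      case (H a' b') then show ?thesis using SH assms pp_hh by simp
    qed
  qed
qed


lemma card4_obtain:
  assumes "card A = 4"
  obtains a b c e where "A = {a,b,c,e}" "distinct [a,b,c,e]"
proof -
  from assms have "card A = Suc (Suc (Suc (Suc 0)))" by simp
  then show ?thesis using that
    by (auto simp: card_Suc_eq)
qed

lemma good_insert:
  assumes "good F" "lor z z \<noteq> 0" "\<forall>u\<in>F. lor z u = 0"
  shows "good (insert z F)" "z \<notin> F"
  using assms by (auto simp: good_def lor_sym)

lemma three_neg:
  fixes F :: "(((real^'n::finite) \<times> real) \<times> real) set"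
  assumes "good F" "card F + 1 \<ge> CARD('n) + 2" "p \<in> F" "lor p p < 0"
    "\<forall>u\<in>F. lor z1 u = 0" "\<forall>u\<in>F. lor z2 u = 0" "\<forall>u\<in>F. lor z3 u = 0"
    "lor z1 z1 = N" "lor z2 z2 = N" "lor z3 z3 = N"
    "lor z1 z2 \<noteq> N" "lor z1 z3 \<noteq> N" "lor z2 z3 \<noteq> N"
  shows False
proof -
  have sq: "(lor z1 z2)^2 = N^2" "(lor z1 z3)^2 = N^2" "(lor z2 z3)^2 = N^2"
    using lemmaP[OF assms(1-4)] assms(5-10) by (simp_all add: power2_eq_square)
  have e: "lor z1 z2 = -N" "lor z1 z3 = -N" "lor z2 z3 = -N"
    using sq assms(11-13) by (simp_all add: power2_eq_iff)
  have ps: "lor p (z1+z2+z3) = 0" using assms(3,5-7) by (simp add: lor_simps lor_sym)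
  have "lor (z1+z2+z3) (z1+z2+z3) = -3*N"
    using e assms(8-10) by (simp add: lor_simps lor_sym)
  moreover have "lor (z1+z2+z3) (z1+z2+z3) \<ge> 0" by (rule reverse_cs(1)[OF assms(4) ps])
  moreover have "N \<ge> 0" using reverse_cs(1)[OF assms(4), of z1] assms(3,5,8) by (simp add: lor_sym)
  ultimately have "N = 0" by simp
  thus False using e assms(11) by simp
qed

lemma pigeon:
  fixes F :: "(((real^'n::finite) \<times> real) \<times> real) set"
  assumes "good F" "card F + 1 \<ge> CARD('n) + 2" "p \<in> F" "lor p p < 0"
    "\<forall>u\<in>F. lor z2 u = 0" "\<forall>u\<in>F. lor z3 u = 0" "\<forall>u\<in>F. lor z4 u = 0"
  shows "lor z2 z3 \<ge> 0 \<or> lor z2 z4 \<ge> 0 \<or> lor z3 z4 \<ge> 0"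
proof (rule ccontr)
  assume neg: "\<not> ?thesis"
  have P: "\<And>a b. \<forall>u\<in>F. lor a u = 0 \<Longrightarrow> \<forall>u\<in>F. lor b u = 0 \<Longrightarrow> (lor a b)^2 = lor a a * lor b b"
    by (rule lemmaP[OF assms(1-4)])
  have pz: "\<And>a. \<forall>u\<in>F. lor a u = 0 \<Longrightarrow> lor p a = 0" using assms(3) by (simp add: lor_sym)
  define n2 where "n2 = lor z2 z2"
  have "n2 \<ge> 0" unfolding n2_def by (rule reverse_cs(1)[OF assms(4) pz[OF assms(5)]])
  have "n2 \<noteq> 0"
  proof
    assume "n2 = 0"
    hence "z2 = 0" using reverse_cs(2)[OF assms(4) pz[OF assms(5)]] n2_def by simp
    thus False using neg by simp
  qed
  have par: "n2 *\<^sub>R z = lor z2 z *\<^sub>R z2" if hz: "\<forall>u\<in>F. lor z u = 0" for z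
  proof -
    define u where "u = lor z2 z *\<^sub>R z2 - n2 *\<^sub>R z"
    have "lor p u = 0" using pz[OF assms(5)] pz[OF hz] by (simp add: u_def lor_simps)
    moreover have "lor u u = n2 * (n2 * lor z z - (lor z2 z)^2)"
      by (simp add: u_def lor_simps lor_sym n2_def power2_eq_square algebra_simps)
    moreover have "(lor z2 z)^2 = n2 * lor z z" using P[OF assms(5) hz] n2_def by simp
    ultimately have "u = 0" using reverse_cs(2)[OF assms(4)] by simp
    thus ?thesis by (simp add: u_def)
  qed
  have "n2 * n2 * lor z3 z4 = lor (n2 *\<^sub>R z3) (n2 *\<^sub>R z4)" by (simp add: lor_simps)
  also have "\<dots> = lor z2 z3 * lor z2 z4 * n2"
    using par[OF assms(6)] par[OF assms(7)] by (simp add: lor_simps n2_def)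
  finally have "n2 * lor z3 z4 = lor z2 z3 * lor z2 z4" using \<open>n2 \<noteq> 0\<close> by (simp add: algebra_simps)
  moreover have "lor z2 z3 * lor z2 z4 > 0" using neg by (simp add: mult_neg_neg)
  ultimately have "lor z3 z4 > 0" using \<open>n2 \<ge> 0\<close> by (smt (verit) mult_nonneg_nonpos)
  thus False using neg by simp
qed


lemma opp:
  assumes "lor p p < 0" "lor p a = 0" "lor p b = 0" "lor a a = 2" "lor b b = 2" "lor a b = -2"
  shows "b = - a"
proof -
  have "lor p (a + b) = 0" using assms by (simp add: lor_simps)
  moreover have "lor (a+b) (a+b) = 0" using assms by (simp add: lor_simps lor_sym)
  ultimately have "a + b = 0" by (rule reverse_cs(2)[OF assms(1)])
  thus ?thesis by (metis add.commute add_diff_cancel_left' diff_0)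
qed

lemma square_from_opp:
  fixes F :: "(((real^'n::finite) \<times> real) \<times> real) set"
  assumes "good F" "card F + 2 \<ge> CARD('n) + 2" "p \<in> F" "lor p p < 0"
    "\<forall>u\<in>F. lor y1 u = 0" "\<forall>u\<in>F. lor y2 u = 0" "\<forall>u\<in>F. lor y3 u = 0" "\<forall>u\<in>F. lor y4 u = 0"
    "lor y1 y1 = 2" "lor y2 y2 = 2" "lor y3 y3 = 2" "lor y4 y4 = 2"
    "lor y1 y3 \<le> 0" "lor y1 y4 \<le> 0" "lor y2 y3 \<le> 0" "lor y2 y4 \<le> 0" "lor y3 y4 \<le> 0"
    "lor y1 y2 = -2"
  shows "lor y3 y4 = -2 \<and> lor y1 y3 = 0 \<and> lor y1 y4 = 0 \<and> lor y2 y3 = 0 \<and> lor y2 y4 = 0"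
proof -
  have pz: "\<And>a. \<forall>u\<in>F. lor a u = 0 \<Longrightarrow> lor p a = 0" using assms(3) by (simp add: lor_sym)
  have y2: "y2 = - y1" by (rule opp[OF assms(4) pz[OF assms(5)] pz[OF assms(6)] assms(9,10,18)])
  have h: "lor y1 y3 = 0" "lor y1 y4 = 0" "lor y2 y3 = 0" "lor y2 y4 = 0"
    using assms(13-16) y2 by (simp_all add: lor_simps)
  have g: "good (insert y1 F)" and nF: "y1 \<notin> F" using good_insert[OF assms(1) _ assms(5)] assms(9) by auto
  have c: "card (insert y1 F) + 1 \<ge> CARD('n) + 2" using nF assms(1,2) by (simp add: good_def)
  have "(lor y3 y4)^2 = lor y3 y3 * lor y4 y4"
    using lemmaP[OF g c _ assms(4), of y3 y4] assms(3,7,8) h by (auto simp: lor_sym)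
  hence "(lor y3 y4)^2 = 2^2" using assms(11,12) by (simp only: power2_eq_square)
  hence "lor y3 y4 = 2 \<or> lor y3 y4 = -2" by (simp only: power2_eq_iff)
  hence "lor y3 y4 = -2" using assms(17) by auto
  thus ?thesis using h by simp
qed

lemma pair:
  fixes F :: "(((real^'n::finite) \<times> real) \<times> real) set"
  assumes "good F" "card F + 2 \<ge> CARD('n) + 2" "p \<in> F" "lor p p < 0"
    "\<forall>u\<in>F. lor y1 u = 0" "\<forall>u\<in>F. lor yk u = 0" "\<forall>u\<in>F. lor yl u = 0"
    "lor y1 y1 = 2" "lor yk yk = 2" "lor yl yl = 2"
    "lor y1 yk \<le> 0" "lor y1 yl \<le> 0" "lor yk yl \<le> 0"
    "lor (yk - (lor y1 yk / 2) *\<^sub>R y1) (yl - (lor y1 yl / 2) *\<^sub>R y1) \<ge> 0"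
  shows "lor y1 yk = -2 \<or> lor y1 yl = -2"
proof -
  define ak where "ak = lor y1 yk / 2"
  define al where "al = lor y1 yl / 2"
  define zk where "zk = yk - ak *\<^sub>R y1"
  define zl where "zl = yl - al *\<^sub>R y1"
  have zkl: "lor zk zl = lor yk yl - 2 * ak * al"
    by (simp add: zk_def zl_def lor_simps lor_sym ak_def al_def assms(8) algebra_simps)
  have nk: "lor zk zk = 2 - 2*ak^2"
    by (simp add: zk_def lor_simps lor_sym ak_def assms(8,9) algebra_simps power2_eq_square)
  have nl: "lor zl zl = 2 - 2*al^2"
    by (simp add: zl_def lor_simps lor_sym al_def assms(8,10) algebra_simps power2_eq_square)
  have "ak * al \<ge> 0" using assms(11,12) by (simp add: ak_def al_def mult_nonpos_nonpos)
  hence z0: "lor zk zl = 0" using zkl assms(13,14) by (simp add: zk_def zl_def ak_def al_def)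
  have g: "good (insert y1 F)" and nF: "y1 \<notin> F" using good_insert[OF assms(1) _ assms(5)] assms(8) by auto
  have c: "card (insert y1 F) + 1 \<ge> CARD('n) + 2" using nF assms(1,2) by (simp add: good_def)
  have zkF: "\<forall>u\<in>insert y1 F. lor zk u = 0"
    using assms(5,6,8) by (simp add: zk_def ak_def lor_simps lor_sym)
  have zlF: "\<forall>u\<in>insert y1 F. lor zl u = 0"
    using assms(5,7,8) by (simp add: zl_def al_def lor_simps lor_sym)
  have "0 = lor zk zk * lor zl zl"
    using lemmaP[OF g c _ assms(4) zkF zlF] assms(3) z0 by simp
  hence "ak^2 = 1 \<or> al^2 = 1" using nk nl by simp
  hence "ak = -1 \<or> al = -1" using assms(11,12) by (auto simp: ak_def al_def power2_eq_1_iff)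
  thus ?thesis by (auto simp: ak_def al_def)
qed

lemma exists_opp:
  fixes F :: "(((real^'n::finite) \<times> real) \<times> real) set"
  assumes "good F" "card F + 2 \<ge> CARD('n) + 2" "p \<in> F" "lor p p < 0"
    "\<forall>u\<in>F. lor y1 u = 0" "\<forall>u\<in>F. lor y2 u = 0" "\<forall>u\<in>F. lor y3 u = 0" "\<forall>u\<in>F. lor y4 u = 0"
    "lor y1 y1 = 2" "lor y2 y2 = 2" "lor y3 y3 = 2" "lor y4 y4 = 2"
    "lor y1 y2 \<le> 0" "lor y1 y3 \<le> 0" "lor y1 y4 \<le> 0" "lor y2 y3 \<le> 0" "lor y2 y4 \<le> 0" "lor y3 y4 \<le> 0"
  shows "lor y1 y2 = -2 \<or> lor y1 y3 = -2 \<or> lor y1 y4 = -2"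
proof -
  define z where "z = (\<lambda>y. y - (lor y1 y / 2) *\<^sub>R y1)"
  have g: "good (insert y1 F)" and nF: "y1 \<notin> F" using good_insert[OF assms(1) _ assms(5)] assms(9) by auto
  have c: "card (insert y1 F) + 1 \<ge> CARD('n) + 2" using nF assms(1,2) by (simp add: good_def)
  have zF: "\<forall>u\<in>insert y1 F. lor (z y) u = 0" if "\<forall>u\<in>F. lor y u = 0" for y
    using assms(5,9) that by (simp add: z_def lor_simps lor_sym)
  have "lor (z y2) (z y3) \<ge> 0 \<or> lor (z y2) (z y4) \<ge> 0 \<or> lor (z y3) (z y4) \<ge> 0"
    using pigeon[OF g c _ assms(4) zF[OF assms(6)] zF[OF assms(7)] zF[OF assms(8)]] assms(3) by simp
  moreover have "lor (z y2) (z y3) \<ge> 0 \<Longrightarrow> ?thesis"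
    using pair[OF assms(1-5,6,7,9,10,11,13,14,16)] unfolding z_def by auto
  moreover have "lor (z y2) (z y4) \<ge> 0 \<Longrightarrow> ?thesis"
    using pair[OF assms(1-5,6,8,9,10,12,13,15,17)] unfolding z_def by auto
  moreover have "lor (z y3) (z y4) \<ge> 0 \<Longrightarrow> ?thesis"
    using pair[OF assms(1-5,7,8,9,11,12,14,15,18)] unfolding z_def by auto
  ultimately show ?thesis by blast
qed


lemma main_alg:
  fixes v v' :: "nat \<Rightarrow> ((real^'n::finite) \<times> real) \<times> real" and w :: "'b \<Rightarrow> ((real^'n) \<times> real) \<times> real"
  assumes d: "CARD('n) \<ge> 3"
    and vv: "\<forall>i<CARD('n)-1. \<forall>j<CARD('n)-1. i \<noteq> j \<longrightarrow>
              lor (v i) (v j) = -1 \<and> lor (v i) (v' j) = -1 \<and> lor (v' i) (v' j) = -1"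
    and vu: "\<forall>i<CARD('n)-1. lor (v i) (v i) = 1 \<and> lor (v' i) (v' i) = 1"
    and anti: "\<forall>i<CARD('n)-1. lor (v i) (v' i) \<le> -1 \<and> (lor (v i) (v' i) = -1 \<longrightarrow> v' i = - v i)"
    and wu: "\<forall>u\<in>V4. lor (w u) (w u) = 1"
    and wv: "\<forall>u\<in>V4. \<forall>i<CARD('n)-1. lor (w u) (v i) = -1 \<and> lor (w u) (v' i) = -1"
    and ww: "\<forall>u\<in>V4. \<forall>u'\<in>V4. u \<noteq> u' \<longrightarrow> lor (w u) (w u') \<le> -1"
    and c4: "card V4 = 4"
  shows "\<exists>a b c e. V4 = {a,b,c,e} \<and> distinct [a,b,c,e] \<and> lor (w a) (w c) = -3 \<and> lor (w b) (w e) = -3 \<and>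
     lor (w a) (w b) = -1 \<and> lor (w a) (w e) = -1 \<and> lor (w c) (w b) = -1 \<and> lor (w c) (w e) = -1"
proof -
  define m where "m = CARD('n) - 1"
  have m2: "m \<ge> 2" using d by (auto simp: m_def)
  have mC: "CARD('n) = m + 1" using d by (auto simp: m_def)
  define x where "x i = v i - v' i" for i
  define p where "p i = (1/2) *\<^sub>R (v i + v' i)" for i
  have vv': "lor (v i) (v j) = -1" "lor (v i) (v' j) = -1" "lor (v' i) (v' j) = -1" "lor (v' i) (v j) = -1"
    if "i < m" "j < m" "i \<noteq> j" for i j
    using vv that by (auto simp: m_def lor_sym)
  have xx: "lor (x i) (x j) = 0" if "i < m" "j < m" "i \<noteq> j" for i j
    using vv'[OF that] by (simp add: x_def lor_simps)
  have xxi: "lor (x i) (x i) \<ge> 4" if "i < m" for i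
    using vu anti that by (auto simp: x_def lor_simps lor_sym m_def)
  have xw: "lor (x i) (w u) = 0" if "i < m" "u \<in> V4" for i u
    using wv that by (auto simp: x_def lor_simps lor_sym m_def)
  have xp: "lor (x i) (p j) = 0" if "i < m" "j < m" for i j
  proof (cases "i = j")
    case True then show ?thesis using vu that by (simp add: x_def p_def lor_simps lor_sym m_def)
  next
    case False then show ?thesis using vv'[OF that False] by (simp add: x_def p_def lor_simps lor_sym)
  qed
  have xp': "lor (p j) (x i) = 0" if "i < m" "j < m" for i j using xp[OF that] by (simp add: lor_sym)
  have xw': "lor (w u) (x i) = 0" if "i < m" "u \<in> V4" for i u using xw[OF that] by (simp add: lor_sym)
  have pw: "lor (p i) (w u) = -1" if "i < m" "u \<in> V4" for i u
    using wv that by (auto simp: p_def lor_simps lor_sym m_def)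
  have p01: "lor (p 0) (p 1) = -1" using vv'[of 0 1] m2 by (simp add: p_def lor_simps lor_sym)
  have pp: "lor (p i) (p i) = (1 + lor (v i) (v' i)) / 2" if "i < m" for i
    using vu that by (simp add: p_def lor_simps lor_sym m_def)
  obtain a0 b0 c0 e0 where V4: "V4 = {a0,b0,c0,e0}" "distinct [a0,b0,c0,e0]" using card4_obtain[OF c4] by blast
  have a0V: "a0 \<in> V4" using V4 by simp
  define X where "X = x ` {..<m}"
  have injx: "inj_on x {..<m}"
  proof (rule inj_onI)
    fix i j assume "i \<in> {..<m}" "j \<in> {..<m}" "x i = x j"
    thus "i = j" using xx[of i j] xxi[of i] by (cases "i = j") auto
  qed
  have cX: "card X = m" using injx by (simp add: X_def card_image)
  have gX: "good X"
    unfolding good_def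
  proof (intro conjI ballI impI)
    show "finite X" by (simp add: X_def)
  next
    fix u assume "u \<in> X"
    then obtain i where "i < m" "u = x i" by (auto simp: X_def)
    thus "lor u u \<noteq> 0" using xxi[of i] by simp
  next
    fix u u' assume "u \<in> X" "u' \<in> X" "u \<noteq> u'"
    then obtain i j where ij: "i < m" "u = x i" "j < m" "u' = x j" by (auto simp: X_def)
    hence "i \<noteq> j" using \<open>u \<noteq> u'\<close> by blast
    thus "lor u u' = 0" using xx[OF ij(1,3)] unfolding ij(2,4) by blast
  qed
  \<comment> \<open>p 0 is timelike\<close>
  have c0: "lor (v 0) (v' 0) \<noteq> -1"
  proof
    assume "lor (v 0) (v' 0) = -1"
    hence "v' 0 = - v 0" using anti[rule_format, of 0] m2 by (simp add: m_def)
    hence "p 0 = 0" unfolding p_def by simp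
    moreover have "lor (p 0) (w a0) = -1" using pw[OF _ a0V, of 0] m2 by simp
    ultimately show False by simp
  qed
  define al where "al = lor (p 0) (p 0)"
  have "0 < m" using m2 by simp
  hence "lor (v 0) (v' 0) \<le> -1" "al = (1 + lor (v 0) (v' 0)) / 2" using anti pp[of 0] by (auto simp: al_def m_def)
  hence al: "al < 0" using c0 by simp
  define a where "a = - 1 / al"
  have a0: "a > 0" using al by (simp add: a_def)
  have aal: "a * al = -1" using al by (simp add: a_def)
  define F0 where "F0 = insert (p 0) X"
  have p0X: "\<forall>u\<in>X. lor (p 0) u = 0" using xp m2 by (auto simp: X_def lor_sym)
  have gF0: "good F0" and p0nX: "p 0 \<notin> X" using good_insert[OF gX _ p0X] al by (auto simp: F0_def al_def)
  have cF0: "card F0 = m + 1" using p0nX gX cX by (simp add: F0_def good_def)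
  define q where "q = p 1 - a *\<^sub>R p 0"
  define y where "y u = w u - a *\<^sub>R p 0" for u
  have qp: "lor q (p 0) = 0" using p01 aal by (simp add: q_def lor_simps lor_sym al_def[symmetric])
  have qX: "\<forall>u\<in>X. lor q u = 0" using xp' m2 by (auto simp: X_def q_def lor_simps)
  have yF0: "\<forall>f\<in>F0. lor (y u) f = 0" if "u \<in> V4" for u
    using xw'[OF _ that] xp'[of _ 0] pw[OF _ that, of 0] m2 aal
    by (auto simp: F0_def X_def y_def lor_simps al_def[symmetric] lor_sym[of "w u"])
  have yy: "lor (y u) (y u') = lor (w u) (w u') + a" if "u \<in> V4" "u' \<in> V4" for u u'
    using pw[OF _ that(1), of 0] pw[OF _ that(2), of 0] m2 aal
    by (simp add: y_def lor_simps lor_sym al_def[symmetric] algebra_simps)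
  have yq: "lor (y u) q = a - 1" if "u \<in> V4" for u
    using pw[OF _ that, of 0] pw[OF _ that, of 1] m2 aal p01
    by (simp add: y_def q_def lor_simps lor_sym al_def[symmetric] algebra_simps)
  have q0: "q = 0"
  proof (rule ccontr)
    assume qn: "q \<noteq> 0"
    define Qn where "Qn = lor q q"
    have "Qn \<ge> 0" "Qn \<noteq> 0" using reverse_cs[OF al[unfolded al_def], of q] qp qn
      by (auto simp: Qn_def lor_sym)
    hence Qp: "Qn > 0" by simp
    define F1 where "F1 = insert q F0"
    have qF0: "\<forall>u\<in>F0. lor q u = 0" using qp qX by (simp add: F0_def)
    have gF1: "good F1" and qnF0: "q \<notin> F0" using good_insert[OF gF0 _ qF0] Qp by (auto simp: F1_def Qn_def)
    have cF1: "card F1 + 1 \<ge> CARD('n) + 2" using qnF0 gF0 cF0 mC by (simp add: F1_def good_def)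
    define t where "t = (a - 1) / Qn"
    define z where "z u = y u - t *\<^sub>R q" for u
    have zF1: "\<forall>f\<in>F1. lor (z u) f = 0" if "u \<in> V4" for u
    proof
      fix f assume "f \<in> F1"
      then consider "f = q" | "f \<in> F0" by (auto simp: F1_def)
      thus "lor (z u) f = 0"
      proof cases
        case 1
        have "lor (z u) q = lor (y u) q - t * Qn" by (simp add: z_def lor_simps Qn_def)
        thus ?thesis using 1 yq[OF that] Qp by (simp add: t_def)
      next
        case 2
        have "lor (q) f = 0" using qF0 2 by blast
        hence "lor f q = 0" by (simp add: lor_sym)
        thus ?thesis using yF0[OF that] 2 by (simp add: z_def lor_simps lor_sym)
      qed
    qed
    have zz: "lor (z u) (z u') = lor (w u) (w u') + a - (a-1)^2 / Qn" if "u \<in> V4" "u' \<in> V4" for u u'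
    proof -
      have "lor (z u) (z u') = lor (y u) (y u') - t * lor (y u) q - t * lor q (y u') + t*t*Qn"
        by (simp add: z_def lor_simps Qn_def[symmetric] algebra_simps)
      also have "lor q (y u') = a - 1" using yq[OF that(2)] by (simp add: lor_sym)
      also have "lor (y u) q = a - 1" using yq[OF that(1)] .
      also have "t*t*Qn = t * (a - 1)" using Qp by (simp add: t_def)
      also have "lor (y u) (y u') = lor (w u) (w u') + a" using yy[OF that] .
      finally have "lor (z u) (z u') = lor (w u) (w u') + a - t * (a - 1)" by simp
      thus ?thesis by (simp add: t_def power2_eq_square)
    qed
    define N where "N = 1 + a - (a-1)^2 / Qn"
    have zN: "lor (z u) (z u) = N" if "u \<in> V4" for u using zz[OF that that] wu that by (simp add: N_def)
    have zne: "lor (z u) (z u') \<noteq> N" if "u \<in> V4" "u' \<in> V4" "u \<noteq> u'" for u u'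
    proof
      assume "lor (z u) (z u') = N"
      hence "lor (w u) (w u') = 1" using zz[OF that(1,2)] by (simp add: N_def)
      moreover have "lor (w u) (w u') \<le> -1" using ww that by blast
      ultimately show False by simp
    qed
    have abc: "a0 \<in> V4" "b0 \<in> V4" "c0 \<in> V4" "a0 \<noteq> b0" "a0 \<noteq> c0" "b0 \<noteq> c0" using V4 by auto
    show False
      using three_neg[OF gF1 cF1 _ al[unfolded al_def] zF1[OF abc(1)] zF1[OF abc(2)] zF1[OF abc(3)]
          zN[OF abc(1)] zN[OF abc(2)] zN[OF abc(3)] zne[OF abc(1,2,4)] zne[OF abc(1,3,5)] zne[OF abc(2,3,6)]]
      by (simp add: F1_def F0_def)
  qed
  have a1: "a = 1" using yq[OF a0V] q0 by simp
  have yy2: "lor (y u) (y u) = 2" if "u \<in> V4" for u using yy[OF that that] wu that a1 by simp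
  have yyn: "lor (y u) (y u') \<le> 0" if "u \<in> V4" "u' \<in> V4" "u \<noteq> u'" for u u'
  proof -
    have "lor (w u) (w u') \<le> -1" using ww that by blast
    thus ?thesis using yy[OF that(1,2)] a1 by simp
  qed
  have yyg: "lor (w u) (w u') = lor (y u) (y u') - 1" if "u \<in> V4" "u' \<in> V4" for u u'
    using yy[OF that] a1 by simp
  have cF0': "card F0 + 2 \<ge> CARD('n) + 2" using cF0 mC by simp
  have p0F0: "p 0 \<in> F0" by (simp add: F0_def)
  note al' = al[unfolded al_def]
  have inV: "a0 \<in> V4" "b0 \<in> V4" "c0 \<in> V4" "e0 \<in> V4" using V4 by auto
  have dst: "a0 \<noteq> b0" "a0 \<noteq> c0" "a0 \<noteq> e0" "b0 \<noteq> c0" "b0 \<noteq> e0" "c0 \<noteq> e0" using V4 by auto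
  note Y = yF0[OF inV(1)] yF0[OF inV(2)] yF0[OF inV(3)] yF0[OF inV(4)]
    yy2[OF inV(1)] yy2[OF inV(2)] yy2[OF inV(3)] yy2[OF inV(4)]
  have sym: "lor (y u) (y u') = lor (y u') (y u)" for u u' by (rule lor_sym)
  have opp3: "lor (y a0) (y b0) = -2 \<or> lor (y a0) (y c0) = -2 \<or> lor (y a0) (y e0) = -2"
    by (rule exists_opp[OF gF0 cF0' p0F0 al' Y yyn[OF inV(1,2) dst(1)] yyn[OF inV(1,3) dst(2)]
          yyn[OF inV(1,4) dst(3)] yyn[OF inV(2,3) dst(4)] yyn[OF inV(2,4) dst(5)] yyn[OF inV(3,4) dst(6)]])
  have yyn': "lor (y u) (y u') \<le> 0" if "u \<in> V4" "u' \<in> V4" "u \<noteq> u'" for u u'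
    using yyn that by blast
  note sq = square_from_opp[OF gF0 cF0' p0F0 al']
  show ?thesis
  proof -
    { assume h: "lor (y a0) (y c0) = -2"
      have r: "lor (y b0) (y e0) = -2 \<and> lor (y a0) (y b0) = 0 \<and> lor (y a0) (y e0) = 0 \<and> lor (y c0) (y b0) = 0 \<and> lor (y c0) (y e0) = 0"
        by (rule sq[OF Y(1,3,2,4) Y(5,7,6,8)]) (use yyn' inV dst h in auto)
      have ?thesis
        apply (rule exI[of _ a0], rule exI[of _ b0], rule exI[of _ c0], rule exI[of _ e0])
        using V4 r h yyg inV by simp }
    moreover
    { assume h: "lor (y a0) (y b0) = -2"
      have r: "lor (y c0) (y e0) = -2 \<and> lor (y a0) (y c0) = 0 \<and> lor (y a0) (y e0) = 0 \<and> lor (y b0) (y c0) = 0 \<and> lor (y b0) (y e0) = 0"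
        by (rule sq[OF Y(1,2,3,4) Y(5,6,7,8)]) (use yyn' inV dst h in auto)
      have ?thesis
        apply (rule exI[of _ a0], rule exI[of _ c0], rule exI[of _ b0], rule exI[of _ e0])
        using V4 r h yyg inV by (auto simp: lor_sym insert_commute) }
    moreover
    { assume h: "lor (y a0) (y e0) = -2"
      have r: "lor (y b0) (y c0) = -2 \<and> lor (y a0) (y b0) = 0 \<and> lor (y a0) (y c0) = 0 \<and> lor (y e0) (y b0) = 0 \<and> lor (y e0) (y c0) = 0"
        by (rule sq[OF Y(1,4,2,3) Y(5,8,6,7)]) (use yyn' inV dst h in auto)
      have ?thesis
        apply (rule exI[of _ a0], rule exI[of _ b0], rule exI[of _ e0], rule exI[of _ c0])
        using V4 r h yyg inV by (auto simp: lor_sym insert_commute) }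
    ultimately show ?thesis using opp3 by blast
  qed
qed


lemma C4_E_iff: "i < 4 \<Longrightarrow> j < 4 \<Longrightarrow> i \<noteq> j \<Longrightarrow> C4_E i j \<longleftrightarrow> i mod 2 \<noteq> j mod 2"
proof -
  assume "i < 4" "j < 4" "i \<noteq> j"
  hence "i \<in> {0,1,2,3}" "j \<in> {0,1,2,3}" by auto
  thus ?thesis using \<open>i \<noteq> j\<close> by (auto simp: C4_E_def)
qed

lemma iso_from_pattern:
  assumes "V4 = {a,b,c,e}" "distinct [a,b,c,e]"
    and irr: "\<forall>u v. E4 u v \<longrightarrow> u \<in> V4 \<and> v \<in> V4 \<and> u \<noteq> v"
    and sym: "\<forall>u v. E4 u v \<longrightarrow> E4 v u"
    and "E4 a b" "E4 a e" "E4 c b" "E4 c e" "\<not> E4 a c" "\<not> E4 b e"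
  shows "graph_iso V4 E4 C4_V C4_E"
proof -
  define f where "f x = (if x = a then 0 else if x = b then 1 else if x = c then 2 else (3::nat))" for x
  have bij: "bij_betw f V4 C4_V"
  proof (rule bij_betw_imageI)
    show "inj_on f V4" using assms(1,2) by (auto simp: inj_on_def f_def)
    show "f ` V4 = C4_V" using assms(1,2) by (auto simp: f_def C4_V_def)
  qed
  have E: "E4 x y \<longleftrightarrow> C4_E (f x) (f y)" if "x \<in> V4" "y \<in> V4" for x y
    using that assms by (auto simp: f_def C4_E_def)
  show ?thesis unfolding graph_iso_def using bij E by blast
qed

lemma forward:
  fixes V4 :: "'b set" and E4 :: "'b \<Rightarrow> 'b \<Rightarrow> bool"
  assumes d: "CARD('n::finite) \<ge> 3"
    and c4: "card V4 = 4"
    and irr: "\<forall>u v. E4 u v \<longrightarrow> u \<in> V4 \<and> v \<in> V4 \<and> u \<noteq> v"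
    and sym: "\<forall>u v. E4 u v \<longrightarrow> E4 v u"
    and bp: "ball_packable TYPE('n) (join_V (orth_V (CARD('n) - 1)) V4) (join_E orth_E E4)"
  shows "graph_iso V4 E4 C4_V C4_E"
proof -
  define m where "m = CARD('n) - 1"
  define V where "V = join_V (orth_V m) V4"
  have "\<exists>B :: _ \<Rightarrow> (real^'n) option set. inj_on B V \<and> (\<forall>v\<in>V. is_dball (B v)) \<and>
        (\<forall>u\<in>V. \<forall>v\<in>V. u \<noteq> v \<longrightarrow> ext_interior (B u) \<inter> ext_interior (B v) = {}) \<and>
        (\<forall>u\<in>V. \<forall>v\<in>V. u \<noteq> v \<longrightarrow> (join_E orth_E E4 u v \<longleftrightarrow> tangent (B u) (B v)))"
    using bp unfolding ball_packable_def V_def m_def .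
  then obtain B :: "_ \<Rightarrow> (real^'n) option set" where
    Binj: "inj_on B V" and
    B: "\<forall>v\<in>V. is_dball (B v)"
       "\<forall>u\<in>V. \<forall>v\<in>V. u \<noteq> v \<longrightarrow> ext_interior (B u) \<inter> ext_interior (B v) = {}"
       "\<forall>u\<in>V. \<forall>v\<in>V. u \<noteq> v \<longrightarrow> (join_E orth_E E4 u v \<longleftrightarrow> tangent (B u) (B v))"
    apply (elim exE conjE)
    apply (rule that)
       apply assumption+
    done
  have inV: "Inl (i, s) \<in> V \<longleftrightarrow> i < m" "Inr u \<in> V \<longleftrightarrow> u \<in> V4" for i s u
    by (auto simp: V_def join_V_def orth_V_def)
  define vec where "vec x = (SOME v. rep (B x) v)" for x
  have rep: "rep (B x) (vec x)" if "x \<in> V" for x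
    unfolding vec_def using rep_exists B(1) that by (metis someI_ex)
  have PPx: "PP (B x) (vec x) (B y) (vec y)" if "x \<in> V" "y \<in> V" "x \<noteq> y" for x y
    by (rule pack_pair[OF rep[OF that(1)] rep[OF that(2)]]) (use B(2) that in blast)
  have Tx: "join_E orth_E E4 x y \<longleftrightarrow> tangent (B x) (B y)" if "x \<in> V" "y \<in> V" "x \<noteq> y" for x y
    using B(3) that by blast
  define v where "v i = vec (Inl (i, True))" for i
  define v' where "v' i = vec (Inl (i, False))" for i
  define w where "w u = vec (Inr u)" for u
  have adj: "lor (vec x) (vec y) = -1" if "x \<in> V" "y \<in> V" "x \<noteq> y" "join_E orth_E E4 x y" for x y
    using PPx[OF that(1-3)] Tx[OF that(1-3)] that(4) by (simp add: PP_def)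
  have unit: "lor (vec x) (vec x) = 1" if "x \<in> V" for x using rep_unit[OF rep[OF that]] .
  have vv: "\<forall>i<CARD('n)-1. \<forall>j<CARD('n)-1. i \<noteq> j \<longrightarrow>
              lor (v i) (v j) = -1 \<and> lor (v i) (v' j) = -1 \<and> lor (v' i) (v' j) = -1"
    unfolding m_def[symmetric] v_def v'_def
    by (intro allI impI conjI adj) (auto simp: inV orth_E_def)
  have vu: "\<forall>i<CARD('n)-1. lor (v i) (v i) = 1 \<and> lor (v' i) (v' i) = 1"
    unfolding m_def[symmetric] v_def v'_def by (auto intro!: unit simp: inV)
  have anti: "\<forall>i<CARD('n)-1. lor (v i) (v' i) \<le> -1 \<and> (lor (v i) (v' i) = -1 \<longrightarrow> v' i = - v i)"
  proof (intro allI impI)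
    fix i assume "i < CARD('n) - 1"
    hence i: "Inl (i, True) \<in> V" "Inl (i, False) \<in> V" "Inl (i, True) \<noteq> Inl (i, False)" by (auto simp: inV m_def)
    have nt: "\<not> tangent (B (Inl (i, True))) (B (Inl (i, False)))" using Tx[OF i] by (simp add: orth_E_def)
    show "lor (v i) (v' i) \<le> -1 \<and> (lor (v i) (v' i) = -1 \<longrightarrow> v' i = - v i)"
      using PPx[OF i] nt unfolding v_def v'_def PP_def by blast
  qed
  have wu: "\<forall>u\<in>V4. lor (w u) (w u) = 1" unfolding w_def by (auto intro!: unit simp: inV)
  have wv: "\<forall>u\<in>V4. \<forall>i<CARD('n)-1. lor (w u) (v i) = -1 \<and> lor (w u) (v' i) = -1"
    unfolding m_def[symmetric] v_def v'_def w_def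
    by (intro ballI allI impI conjI adj) (auto simp: inV)
  have ww: "\<forall>u\<in>V4. \<forall>u'\<in>V4. u \<noteq> u' \<longrightarrow> lor (w u) (w u') \<le> -1"
  proof (intro ballI impI)
    fix u u' assume "u \<in> V4" "u' \<in> V4" "u \<noteq> u'"
    hence "Inr u \<in> V" "Inr u' \<in> V" "Inr u \<noteq> (Inr u' :: (nat \<times> bool) + 'b)" by (auto simp: inV)
    from PPx[OF this] show "lor (w u) (w u') \<le> -1" by (simp add: PP_def w_def)
  qed
  obtain a b c e where pat: "V4 = {a,b,c,e}" "distinct [a,b,c,e]" "lor (w a) (w c) = -3" "lor (w b) (w e) = -3"
     "lor (w a) (w b) = -1" "lor (w a) (w e) = -1" "lor (w c) (w b) = -1" "lor (w c) (w e) = -1"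
    using main_alg[OF d vv vu anti wu wv ww c4] by blast
  have m0: "0 < m" using d by (simp add: m_def)
  have E4iff: "E4 u u' \<longleftrightarrow> lor (w u) (w u') = -1" if "u \<in> V4" "u' \<in> V4" "u \<noteq> u'" for u u'
  proof -
    have i: "Inr u \<in> V" "Inr u' \<in> V" "Inr u \<noteq> (Inr u' :: (nat \<times> bool) + 'b)" using that by (auto simp: inV)
    have nn: "w u' \<noteq> - w u"
    proof
      assume h: "w u' = - w u"
      have "lor (w u') (v 0) = -1" "lor (w u) (v 0) = -1" using wv that m0 by (auto simp: m_def)
      thus False using h by (simp add: lor_simps)
    qed
    have "E4 u u' \<longleftrightarrow> tangent (B (Inr u)) (B (Inr u'))" using Tx[OF i] by simp
    also have "\<dots> \<longleftrightarrow> lor (w u) (w u') = -1" using PPx[OF i] nn unfolding PP_def w_def by blast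
    finally show ?thesis .
  qed
  have inP: "a \<in> V4" "b \<in> V4" "c \<in> V4" "e \<in> V4" using pat by auto
  show ?thesis
  proof (rule iso_from_pattern[OF pat(1,2) irr sym])
    show "E4 a b" using E4iff[OF inP(1,2)] pat by auto
    show "E4 a e" using E4iff[OF inP(1,4)] pat by auto
    show "E4 c b" using E4iff[OF inP(3,2)] pat by auto
    show "E4 c e" using E4iff[OF inP(3,4)] pat by auto
    show "\<not> E4 a c" using E4iff[OF inP(1,3)] pat by auto
    show "\<not> E4 b e" using E4iff[OF inP(2,4)] pat by auto
  qed
qed


lemma C4_E_iff': "i < 4 \<Longrightarrow> j < 4 \<Longrightarrow> i \<noteq> j \<Longrightarrow> C4_E i j \<longleftrightarrow> i mod 2 \<noteq> j mod 2"
proof -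
  assume "i < 4" "j < 4" "i \<noteq> j"
  hence "i \<in> {0,1,2,3}" "j \<in> {0,1,2,3}" by auto
  thus ?thesis using \<open>i \<noteq> j\<close> by (auto simp: C4_E_def)
qed

lemma sqrt2_facts: "sqrt 2 / 2 > 0" "sqrt 2 / 2 < 1" "sqrt 2 / 2 + sqrt 2 / 2 = sqrt 2" "sqrt 2 < 2"
proof -
  have p: "sqrt 2 * sqrt 2 = (2::real)" by simp
  show "sqrt 2 < 2"
  proof (rule ccontr)
    assume "\<not> ?thesis" hence "2 \<le> sqrt 2" by simp
    hence "2*2 \<le> sqrt 2 * sqrt (2::real)" by (intro mult_mono) auto
    thus False using p by simp
  qed
  thus "sqrt 2 / 2 < 1" by simp
  show "sqrt 2 / 2 > 0" by simp
  show "sqrt 2 / 2 + sqrt 2 / 2 = sqrt 2" by simp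
qed

lemma cen_dist:
  fixes p q :: "'n::finite"
  assumes "\<bar>\<sigma>\<bar> = 1" "\<bar>\<tau>\<bar> = 1"
  shows "dist (\<sigma> *\<^sub>R axis p (1::real)) (\<tau> *\<^sub>R axis q 1) =
     (if p = q then (if \<sigma> = \<tau> then 0 else 2) else sqrt 2)"
proof -
  have ss: "\<sigma> * \<sigma> = 1" "\<tau> * \<tau> = 1" using assms by (metis abs_mult_self_eq mult_1_right)+
  have "(dist (\<sigma> *\<^sub>R axis p (1::real)) (\<tau> *\<^sub>R axis q 1))^2 =
        inner (\<sigma> *\<^sub>R axis p (1::real) - \<tau> *\<^sub>R axis q 1) (\<sigma> *\<^sub>R axis p 1 - \<tau> *\<^sub>R axis q 1)"
    by (simp add: dist_norm power2_norm_eq_inner)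
  also have "\<dots> = \<sigma>*\<sigma> + \<tau>*\<tau> - 2 * \<sigma> * \<tau> * (if p = q then 1 else 0)"
    by (simp add: inner_diff_left inner_diff_right inner_axis_axis algebra_simps)
  finally have sq: "(dist (\<sigma> *\<^sub>R axis p (1::real)) (\<tau> *\<^sub>R axis q 1))^2 = 2 - 2 * \<sigma> * \<tau> * (if p = q then 1 else 0)"
    using ss by simp
  show ?thesis
  proof (cases "p = q")
    case False
    hence "(dist (\<sigma> *\<^sub>R axis p (1::real)) (\<tau> *\<^sub>R axis q 1))^2 = 2" using sq by simp
    thus ?thesis using False by (simp add: real_sqrt_unique[symmetric])
  next
    case True
    have "\<sigma> = 1 \<or> \<sigma> = -1" "\<tau> = 1 \<or> \<tau> = -1" using assms by auto
    then show ?thesis using True by auto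
  qed
qed

lemma backward:
  fixes V4 :: "'b set" and E4 :: "'b \<Rightarrow> 'b \<Rightarrow> bool"
  assumes d: "CARD('n::finite) \<ge> 3"
    and c4: "card V4 = 4"
    and irr: "\<forall>u v. E4 u v \<longrightarrow> u \<in> V4 \<and> v \<in> V4 \<and> u \<noteq> v"
    and sym: "\<forall>u v. E4 u v \<longrightarrow> E4 v u"
    and iso: "graph_iso V4 E4 C4_V C4_E"
  shows "ball_packable TYPE('n) (join_V (orth_V (CARD('n) - 1)) V4) (join_E orth_E E4)"
proof -
  define m where "m = CARD('n) - 1"
  have m2: "m \<ge> 2" using d by (simp add: m_def)
  define V where "V = join_V (orth_V m) V4"
  obtain f where f: "bij_betw f V4 C4_V" "\<forall>u\<in>V4. \<forall>v\<in>V4. E4 u v \<longleftrightarrow> C4_E (f u) (f v)"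
    using iso unfolding graph_iso_def by blast
  have f4: "f u < 4" if "u \<in> V4" for u using f(1) that by (auto simp: bij_betw_def C4_V_def)
  have finj: "u = v" if "u \<in> V4" "v \<in> V4" "f u = f v" for u v
    using f(1) that by (auto simp: bij_betw_def inj_on_def)
  obtain h :: "nat \<Rightarrow> 'n" where h: "bij_betw h {0..<CARD('n)} UNIV"
    using ex_bij_betw_nat_finite[of "UNIV::'n set"] by auto
  have hinj: "h j = h j' \<longleftrightarrow> j = j'" if "j < CARD('n)" "j' < CARD('n)" for j j'
    using h that by (auto simp: bij_betw_def inj_on_def)
  define \<rho> where "\<rho> = sqrt 2 / 2"
  define r1 where "r1 = 1 - \<rho>"
  define R0 where "R0 = 1 + \<rho>"
  have \<rho>: "\<rho> > 0" "\<rho> < 1" "\<rho> + \<rho> = sqrt 2" "sqrt 2 < 2" using sqrt2_facts by (auto simp: \<rho>_def)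
  have r1: "r1 > 0" "r1 < R0" "R0 > 0" using \<rho> by (auto simp: r1_def R0_def)
  define sg where "sg s = (if s then 1 else -1 :: real)" for s
  have sg: "\<bar>sg s\<bar> = 1" for s by (simp add: sg_def)
  define cen where "cen p = sg (snd p) *\<^sub>R (axis (h (fst p)) (1::real) :: real^'n)" for p :: "nat \<times> bool"
  have ncen: "norm (cen p) = 1" for p by (simp add: cen_def sg_def)
  define idx where "idx x = (case x of Inl (i, s) \<Rightarrow> (i + 2, s) | Inr u \<Rightarrow> (f u mod 2, f u < 2))"
    for x :: "(nat \<times> bool) + 'b"
  define isb where "isb x = (case x of Inl (i, s) \<Rightarrow> i < m - 1 | Inr u \<Rightarrow> True)" for x :: "(nat \<times> bool) + 'b"
  define inn where "inn = (Inl (m - 1, True) :: (nat \<times> bool) + 'b)"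
  define out where "out = (Inl (m - 1, False) :: (nat \<times> bool) + 'b)"
  define B where "B x = (if isb x then Some ` cball (cen (idx x)) \<rho>
      else if x = inn then Some ` cball 0 r1 else insert None (Some ` (- ball 0 R0)))" for x
  have inV: "Inl (i, s) \<in> V \<longleftrightarrow> i < m" "Inr u \<in> V \<longleftrightarrow> u \<in> V4" for i s u
    by (auto simp: V_def join_V_def orth_V_def)
  have cls: "isb x \<or> x = inn \<or> x = out" if "x \<in> V" for x
  proof (cases x)
    case (Inl p)
    obtain i s where p: "p = (i, s)" by (cases p)
    have "i < m" using that Inl p inV by simp
    thus ?thesis using Inl p by (cases s) (auto simp: isb_def inn_def out_def)
  next
    case (Inr u) then show ?thesis by (simp add: isb_def)
  qed
  have nb: "\<not> isb inn" "\<not> isb out" "inn \<noteq> out" "inn \<in> V" "out \<in> V"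
    using m2 by (auto simp: isb_def inn_def out_def inV)
  have Binn: "B inn = Some ` cball 0 r1" using nb by (simp add: B_def)
  have Bout: "B out = insert None (Some ` (- ball 0 R0))" using nb by (simp add: B_def)
  have Bb: "isb x \<Longrightarrow> B x = Some ` cball (cen (idx x)) \<rho>" for x by (simp add: B_def)
  have jsym: "join_E orth_E E4 x y = join_E orth_E E4 y x" for x y
    using sym by (cases x; cases y) (auto simp: orth_E_def)
  have idx_lt: "fst (idx x) < CARD('n)" if "x \<in> V" "isb x" for x
  proof (cases x)
    case (Inl p)
    obtain i s where p: "p = (i, s)" by (cases p)
    show ?thesis using that Inl p m2 by (simp add: idx_def isb_def m_def)
  next
    case (Inr u) then show ?thesis using d by (simp add: idx_def)
  qed
  have K1: "idx x \<noteq> idx y \<and> (join_E orth_E E4 x y \<longleftrightarrow> fst (idx x) \<noteq> fst (idx y))"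
    if "x \<in> V" "y \<in> V" "isb x" "isb y" "x \<noteq> y" for x y
  proof (cases x)
    case (Inl p)
    obtain i s where p: "p = (i, s)" by (cases p)
    show ?thesis
    proof (cases y)
      case (Inl q)
      obtain j t where q: "q = (j, t)" by (cases q)
      show ?thesis using that Inl p \<open>x = _\<close> q by (auto simp: idx_def orth_E_def)
    next
      case (Inr u')
      have "f u' mod 2 < 2" by simp
      then show ?thesis using that Inl p Inr by (auto simp: idx_def)
    qed
  next
    case (Inr u)
    show ?thesis
    proof (cases y)
      case (Inl q)
      obtain j t where q: "q = (j, t)" by (cases q)
      have "f u mod 2 < 2" by simp
      then show ?thesis using that Inl q Inr by (auto simp: idx_def)
    next
      case (Inr u')
      have uV: "u \<in> V4" "u' \<in> V4" using that \<open>x = Inr u\<close> Inr by (auto simp: inV)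
      have ne: "f u \<noteq> f u'" using finj[OF uV] that \<open>x = Inr u\<close> Inr by auto
      have lt: "f u < 4" "f u' < 4" using f4 uV by auto
      have e: "E4 u u' \<longleftrightarrow> f u mod 2 \<noteq> f u' mod 2" using f(2) uV C4_E_iff'[OF lt ne] by simp
      have "(f u mod 2, f u < 2) \<noteq> (f u' mod 2, f u' < 2)"
      proof
        assume "(f u mod 2, f u < 2) = (f u' mod 2, f u' < 2)"
        hence "f u mod 2 = f u' mod 2" "f u < 2 \<longleftrightarrow> f u' < 2" by auto
        thus False using lt ne by presburger
      qed
      thus ?thesis using e \<open>x = Inr u\<close> Inr by (simp add: idx_def)
    qed
  qed
  have K2: "join_E orth_E E4 inn y \<and> join_E orth_E E4 out y" if "y \<in> V" "isb y" for y
  proof (cases y)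
    case (Inl q)
    obtain j t where q: "q = (j, t)" by (cases q)
    show ?thesis using that Inl q by (simp add: inn_def out_def isb_def orth_E_def)
  next
    case (Inr u') then show ?thesis by (simp add: inn_def out_def)
  qed
  have K3: "\<not> join_E orth_E E4 inn out" by (simp add: inn_def out_def orth_E_def)
  define Good where "Good x y \<longleftrightarrow> ext_interior (B x) \<inter> ext_interior (B y) = {} \<and>
      (join_E orth_E E4 x y \<longleftrightarrow> tangent (B x) (B y))" for x y
  have Gsym: "Good x y \<Longrightarrow> Good y x" for x y
    unfolding Good_def using jsym tangent_sym by blast
  have G_bb: "Good x y" if "x \<in> V" "y \<in> V" "isb x" "isb y" "x \<noteq> y" for x y
  proof -
    note k = K1[OF that]
    have dd: "dist (cen (idx x)) (cen (idx y)) = (if fst (idx x) = fst (idx y) then 2 else sqrt 2)"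
    proof -
      have "dist (cen (idx x)) (cen (idx y)) = (if h (fst (idx x)) = h (fst (idx y))
          then (if sg (snd (idx x)) = sg (snd (idx y)) then 0 else 2) else sqrt 2)"
        unfolding cen_def by (rule cen_dist[OF sg sg])
      moreover have "h (fst (idx x)) = h (fst (idx y)) \<longleftrightarrow> fst (idx x) = fst (idx y)"
        using hinj idx_lt that by blast
      moreover have "fst (idx x) = fst (idx y) \<Longrightarrow> sg (snd (idx x)) \<noteq> sg (snd (idx y))"
        using k by (auto simp: sg_def prod_eq_iff split: if_splits)
      ultimately show ?thesis by auto
    qed
    have ge: "\<rho> + \<rho> \<le> dist (cen (idx x)) (cen (idx y))" using dd \<rho> by auto
    have "ball (cen (idx x)) \<rho> \<inter> ball (cen (idx y)) \<rho> = {}" by (rule disjoint_ballI[OF ge])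
    hence i: "ext_interior (B x) \<inter> ext_interior (B y) = {}"
      using int_ball_up[of "cen (idx x)" \<rho>] int_ball_up[of "cen (idx y)" \<rho>] that(3,4) by (auto simp: Bb)
    have "tangent (B x) (B y) \<longleftrightarrow> dist (cen (idx x)) (cen (idx y)) = \<rho> + \<rho>"
      using tan_bb[OF \<rho>(1) \<rho>(1) ge] that(3,4) by (simp add: Bb)
    also have "\<dots> \<longleftrightarrow> fst (idx x) \<noteq> fst (idx y)" using dd \<rho> by auto
    finally show ?thesis unfolding Good_def using i k by simp
  qed
  have G_bi: "Good x inn" if "x \<in> V" "isb x" for x
  proof -
    have dd: "dist (cen (idx x)) 0 = \<rho> + r1" using ncen by (simp add: r1_def)
    have "ball (cen (idx x)) \<rho> \<inter> ball 0 r1 = {}" by (rule disjoint_ballI) (use dd in linarith)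
    hence i: "ext_interior (B x) \<inter> ext_interior (B inn) = {}"
      using int_ball_up[of "cen (idx x)" \<rho>] int_ball_up[of 0 r1] that by (auto simp: Bb Binn)
    have "tangent (Some ` cball (cen (idx x)) \<rho>) (Some ` cball 0 r1)"
      using tan_bb[OF \<rho>(1) r1(1), of "cen (idx x)" 0] dd by simp
    hence "tangent (B x) (B inn)" using that by (simp add: Bb Binn)
    moreover have "join_E orth_E E4 x inn" using K2[OF that] jsym by blast
    ultimately show ?thesis unfolding Good_def using i by simp
  qed
  have G_bo: "Good x out" if "x \<in> V" "isb x" for x
  proof -
    have dd: "dist (cen (idx x)) 0 + \<rho> = R0" using ncen by (simp add: R0_def)
    have c0: "cen (idx x) \<noteq> 0" using ncen[of "idx x"] by auto
    have "ball (cen (idx x)) \<rho> \<inter> - cball 0 R0 = {}"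
    proof (rule ccontr)
      assume "\<not> ?thesis"
      then obtain z where "z \<in> ball (cen (idx x)) \<rho>" "z \<in> - cball 0 R0" by blast
      hence z: "dist (cen (idx x)) z < \<rho>" "dist 0 z > R0" by (simp_all only: mem_ball mem_cball Compl_iff not_le)
      have "dist 0 z \<le> dist 0 (cen (idx x)) + dist (cen (idx x)) z" by (rule dist_triangle)
      moreover have "dist 0 (cen (idx x)) = dist (cen (idx x)) 0" by (rule dist_commute)
      ultimately show False using z dd by linarith
    qed
    hence i: "ext_interior (B x) \<inter> ext_interior (B out) = {}"
      using int_ball_up[of "cen (idx x)" \<rho>] int_ext_up[OF r1(3), of 0] that by (auto simp: Bb Bout)
    have "tangent (Some ` cball (cen (idx x)) \<rho>) (insert None (Some ` (- ball 0 R0)))"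
      using tan_be[OF \<rho>(1) r1(3), of "cen (idx x)" 0] dd c0 by simp
    hence "tangent (B x) (B out)" using that by (simp add: Bb Bout)
    moreover have "join_E orth_E E4 x out" using K2[OF that] jsym by blast
    ultimately show ?thesis unfolding Good_def using i by simp
  qed
  have G_io: "Good inn out"
  proof -
    have e: "cball (0::real^'n) r1 \<inter> - ball 0 R0 = {}" using r1 by auto
    have "ball (0::real^'n) r1 \<inter> - cball 0 R0 = {}" using r1 by auto
    hence i: "ext_interior (B inn) \<inter> ext_interior (B out) = {}"
      using int_ball_up[of 0 r1] int_ext_up[OF r1(3), of 0] by (auto simp: Binn Bout)
    have "\<not> tangent (B inn) (B out)" unfolding Binn Bout tangent_SN e by blast
    thus ?thesis unfolding Good_def using i K3 by simp
  qed
  have Gall: "Good x y" if "x \<in> V" "y \<in> V" "x \<noteq> y" for x y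
  proof -
    note xyV = that
    have "isb x \<or> x = inn \<or> x = out" "isb y \<or> y = inn \<or> y = out" using cls xyV by auto
    then consider "isb x" | "x = inn" | "x = out" by blast
    moreover consider "isb y" | "y = inn" | "y = out" using \<open>isb y \<or> y = inn \<or> y = out\<close> by blast
    ultimately show ?thesis
      using G_bb[OF that(1,2) _ _ that(3)] G_bi[OF that(1)] G_bi[OF that(2)] G_bo[OF that(1)] G_bo[OF that(2)]
        G_io Gsym[OF G_io] Gsym[OF G_bi[OF that(2)]] Gsym[OF G_bo[OF that(2)]] that(3) nb
      by metis
  qed
  have intne: "ext_interior (B x) \<noteq> {}" if xV: "x \<in> V" for x
  proof -
    have "isb x \<or> x = inn \<or> x = out" using cls xV by auto
    then consider "isb x" | "x = inn" | "x = out" by blast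
    thus ?thesis
    proof cases
      case 1
      have "Some (cen (idx x)) \<in> Some ` ball (cen (idx x)) \<rho>" using \<rho> by simp
      thus ?thesis using int_ball[of "cen (idx x)" \<rho>] 1 by (auto simp: Bb)
    next
      case 2
      have "Some 0 \<in> Some ` ball (0::real^'n) r1" using r1 by simp
      thus ?thesis using int_ball[of 0 r1] 2 by (auto simp: Binn)
    next
      case 3
      thus ?thesis using int_ext[of 0 R0] by (auto simp: Bout)
    qed
  qed
  have inj: "inj_on B V"
  proof (rule inj_onI)
    fix x y assume xy: "x \<in> V" "y \<in> V" "B x = B y"
    show "x = y"
    proof (rule ccontr)
      assume "x \<noteq> y"
      hence "ext_interior (B x) \<inter> ext_interior (B y) = {}" using Gall xy unfolding Good_def by blast
      thus False using intne[OF xy(1)] xy(3) by simp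
    qed
  qed
  have db: "is_dball (B x)" if xV: "x \<in> V" for x
  proof -
    have "isb x \<or> x = inn \<or> x = out" using cls xV by auto
    then consider "isb x" | "x = inn" | "x = out" by blast
    thus ?thesis
    proof cases
      case 1 thus ?thesis unfolding is_dball_def using \<rho>(1) Bb[OF 1] by blast
    next
      case 2 thus ?thesis unfolding is_dball_def using r1 Binn by blast
    next
      case 3 thus ?thesis unfolding is_dball_def using r1 Bout by blast
    qed
  qed
  show ?thesis
    unfolding ball_packable_def m_def[symmetric] V_def[symmetric]
    using inj db Gall unfolding Good_def by blast
qed


theorem corollary3p8:
  fixes V4 :: "'b set" and E4 :: "'b \<Rightarrow> 'b \<Rightarrow> bool"
  assumes "CARD('n::finite) \<ge> 3"
    and "card V4 = 4"
    and "\<forall>u v. E4 u v \<longrightarrow> u \<in> V4 \<and> v \<in> V4 \<and> u \<noteq> v"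
    and "\<forall>u v. E4 u v \<longrightarrow> E4 v u"
  shows "ball_packable TYPE('n) (join_V (orth_V (CARD('n) - 1)) V4) (join_E orth_E E4)
           \<longleftrightarrow> graph_iso V4 E4 C4_V C4_E"
proof
  assume "ball_packable TYPE('n) (join_V (orth_V (CARD('n) - 1)) V4) (join_E orth_E E4)"
  thus "graph_iso V4 E4 C4_V C4_E" by (rule forward[OF assms])
next
  assume "graph_iso V4 E4 C4_V C4_E"
  thus "ball_packable TYPE('n) (join_V (orth_V (CARD('n) - 1)) V4) (join_E orth_E E4)"
    by (rule backward[OF assms])
qed

end
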